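(* Let $\ell$ be a prime and let $G=C$ be a Cartan subgroup of $\mathrm{GL}_2(\mathbb{Z}_\ell)$. If $C$ is split, then $$\mu_{a,b}=\begin{cases}\dfrac{(\ell-2)^2}{(\ell-1)^2} & a=0,\ b=0,\\[2mm] \dfrac{2(\ell-2)}{\ell-1}\,\ell^{-b} & a=0,\ b>0,\\[2mm] \ell^{-2a} & a>0,\ b=0,\\ 2\,\ell^{-2a-b} & a>0,\ b>0.\end{cases}$$ If $C$ is nonsplit, then $$\mu_{a,b}=\begin{cases}\dfrac{\ell^2-2}{\ell^2-1} & a=0,\ b=0,\\[2mm] \ell^{-2a} & a>0,\ b=0,\\ 0 & b>0.\end{cases}$$
   Context: Let $\ell$ be a prime. A quadratic ring over $\mathbb{Z}_\ell$ is a subring $R$ (containing $1$) of a reduced $\mathbb{Q}_\ell$-algebra $F$ of degree $2$ (so $F$ is a quadratic field extension of $\mathbb{Q}_\ell$ or $F=\mathbb{Q}_\ell^2$) such that $R$ is a finitely generated $\mathbb{Z}_\ell$-module and $\mathbb{Q}_\ell R=F$; $\mathcal{O}_F$ denotes the maximal order of $F$ ($\mathcal{O}_F=\mathbb{Z}_\ell^2$ if $F=\mathbb{Q}_\ell^2$). The Cartan subgroup of $\mathrm{GL}_2(\mathbb{Z}_\ell)$ associated with $R$ is the group $R^\times$, embedded in $\mathrm{GL}_2(\mathbb{Z}_\ell)$ via its action by left multiplication on $R$ written in a $\mathbb{Z}_\ell$-basis of $R$ (well defined up to conjugation). It is maximal if $\ell\nmid[\mathcal{O}_F:R]$; split if it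 is maximal and $F\cong\mathbb{Q}_\ell^2$; nonsplit if it is maximal and $F$ is the unramified quadratic field extension of $\mathbb{Q}_\ell$; ramified otherwise. (A split Cartan subgroup is conjugate to the group of invertible diagonal matrices.) Identify each $M\in\mathrm{GL}_2(\mathbb{Z}_\ell)$ with an automorphism of $\varinjlim_n(\mathbb{Z}/\ell^n\mathbb{Z})^2$. For a subgroup $G\subseteq\mathrm{GL}_2(\mathbb{Z}_\ell)$ and integers $a,b\geq0$ let $\mathcal{M}_{a,b}=\{M\in G:\ \ker(M-I)\cong\mathbb{Z}/\ell^a\mathbb{Z}\times\mathbb{Z}/\ell^{a+b}\mathbb{Z}\}$, where the kernel is taken on $\varinjlim_n(\mathbb{Z}/\ell^n\mathbb{Z})^2$, and let $\mu_{a,b}$ be the measure of $\mathcal{M}_{a,b}$ with respect to the Haar measure of $G$ normalized so that $G$ has measure $1$. *)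

theory Defs
  imports Complex_Main "HOL-Computational_Algebra.Primes" "HOL-Algebra.Elementary_Groups"
begin

type_synonym zl = "nat \<Rightarrow> int"

text \<open>An element of Z_l is a compatible family (x n mod l^n)_n with 0 <= x n < l^n.\<close>
definition Zl :: "nat \<Rightarrow> zl set" where
  "Zl l = {x. \<forall>n. 0 \<le> x n \<and> x n < int l ^ n \<and> x (Suc n) mod (int l ^ n) = x n}"

definition zadd :: "nat \<Rightarrow> zl \<Rightarrow> zl \<Rightarrow> zl" where
  "zadd l x y = (\<lambda>n. (x n + y n) mod (int l ^ n))"

definition zsub :: "nat \<Rightarrow> zl \<Rightarrow> zl \<Rightarrow> zl" where
  "zsub l x y = (\<lambda>n. (x n - y n) mod (int l ^ n))"

definition zmul :: "nat \<Rightarrow> zl \<Rightarrow> zl \<Rightarrow> zl" where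
  "zmul l x y = (\<lambda>n. (x n * y n) mod (int l ^ n))"

definition zneg :: "nat \<Rightarrow> zl \<Rightarrow> zl" where
  "zneg l x = (\<lambda>n. (- x n) mod (int l ^ n))"

definition zzero :: zl where
  "zzero = (\<lambda>n. 0)"

definition zone :: "nat \<Rightarrow> zl" where
  "zone l = (\<lambda>n. 1 mod (int l ^ n))"

definition zunit :: "nat \<Rightarrow> zl \<Rightarrow> bool" where
  "zunit l x \<longleftrightarrow> x \<in> Zl l \<and> (\<exists>y \<in> Zl l. zmul l x y = zone l)"

text \<open>(a,b,c,d) stands for the matrix [[a,b],[c,d]].\<close>
type_synonym zmat = "zl \<times> zl \<times> zl \<times> zl"

definition mat_in :: "nat \<Rightarrow> zmat \<Rightarrow> bool" where
  "mat_in l M = (case M of (a,b,c,d) \<Rightarrow> a \<in> Zl l \<and> b \<in> Zl l \<and> c \<in> Zl l \<and> d \<in> Zl l)"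

definition mmul :: "nat \<Rightarrow> zmat \<Rightarrow> zmat \<Rightarrow> zmat" where
  "mmul l M N = (case M of (a,b,c,d) \<Rightarrow> case N of (e,f,g,h) \<Rightarrow>
     (zadd l (zmul l a e) (zmul l b g), zadd l (zmul l a f) (zmul l b h),
      zadd l (zmul l c e) (zmul l d g), zadd l (zmul l c f) (zmul l d h)))"

definition mdet :: "nat \<Rightarrow> zmat \<Rightarrow> zl" where
  "mdet l M = (case M of (a,b,c,d) \<Rightarrow> zsub l (zmul l a d) (zmul l b c))"

definition GL2 :: "nat \<Rightarrow> zmat set" where
  "GL2 l = {M. mat_in l M \<and> zunit l (mdet l M)}"

text \<open>The set P C P^-1 (for P in GL_2(Z_l)), written as N P = P M.\<close>
definition conj_set :: "nat \<Rightarrow> zmat \<Rightarrow> zmat set \<Rightarrow> zmat set" where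
  "conj_set l P C = {N. mat_in l N \<and> (\<exists>M\<in>C. mmul l N P = mmul l P M)}"

text \<open>Split Cartan: R = Z_l x Z_l, i.e. invertible diagonal matrices, up to conjugation.\<close>
definition split_std :: "nat \<Rightarrow> zmat set" where
  "split_std l = {(x, zzero, zzero, y) | x y. zunit l x \<and> zunit l y}"

text \<open>Nonsplit Cartan: R = Z_l[alpha] with alpha^2 = t alpha - n, X^2 - tX + n irreducible mod l
  (this R is the ring of integers of the unramified quadratic extension).  Multiplication by
  x + y alpha in the basis (1, alpha) is the matrix [[x, -n y],[y, x + t y]].\<close>
definition nonsplit_std :: "nat \<Rightarrow> zl \<Rightarrow> zl \<Rightarrow> zmat set" where
  "nonsplit_std l t n = {(x, zneg l (zmul l n y), y, zadd l x (zmul l t y)) | x y.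
      x \<in> Zl l \<and> y \<in> Zl l} \<inter> GL2 l"

definition split_cartan :: "nat \<Rightarrow> zmat set \<Rightarrow> bool" where
  "split_cartan l G \<longleftrightarrow> (\<exists>P\<in>GL2 l. G = conj_set l P (split_std l))"

definition nonsplit_cartan :: "nat \<Rightarrow> zmat set \<Rightarrow> bool" where
  "nonsplit_cartan l G \<longleftrightarrow> (\<exists>P\<in>GL2 l. \<exists>t\<in>Zl l. \<exists>n\<in>Zl l.
      (\<forall>z::int. (z^2 - t 1 * z + n 1) mod int l \<noteq> 0) \<and>
      G = conj_set l P (nonsplit_std l t n))"

text \<open>Q_l/Z_l is modelled as Z[1/l]/Z: rationals in [0,1) with l-power denominator.\<close>
definition QZ :: "nat \<Rightarrow> rat set" where
  "QZ l = {q. 0 \<le> q \<and> q < 1 \<and> (\<exists>k. q * of_nat l ^ k \<in> \<int>)}"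

definition lvl :: "nat \<Rightarrow> rat \<Rightarrow> nat" where
  "lvl l q = (LEAST k. q * of_nat l ^ k \<in> \<int>)"

definition act :: "nat \<Rightarrow> zl \<Rightarrow> rat \<Rightarrow> rat" where
  "act l x q = frac (of_int (x (lvl l q)) * q)"

definition qadd :: "rat \<Rightarrow> rat \<Rightarrow> rat" where
  "qadd u v = frac (u + v)"

definition mact :: "nat \<Rightarrow> zmat \<Rightarrow> rat \<times> rat \<Rightarrow> rat \<times> rat" where
  "mact l M p = (case M of (a,b,c,d) \<Rightarrow> case p of (u,v) \<Rightarrow>
     (qadd (act l a u) (act l b v), qadd (act l c u) (act l d v)))"

definition ker_group :: "nat \<Rightarrow> zmat \<Rightarrow> (rat \<times> rat) monoid" where
  "ker_group l M = \<lparr>carrier = {p \<in> QZ l \<times> QZ l. mact l M p = p},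
     monoid.mult = (\<lambda>p q. (qadd (fst p) (fst q), qadd (snd p) (snd q))),
     one = (0, 0)\<rparr>"

definition Mab :: "nat \<Rightarrow> zmat set \<Rightarrow> nat \<Rightarrow> nat \<Rightarrow> zmat set" where
  "Mab l G a b = {M \<in> G. ker_group l M \<cong>
      DirProd (integer_mod_group (l ^ a)) (integer_mod_group (l ^ (a + b)))}"

definition red :: "nat \<Rightarrow> nat \<Rightarrow> zmat \<Rightarrow> int \<times> int \<times> int \<times> int" where
  "red l n M = (case M of (a,b,c,d) \<Rightarrow> (a n, b n, c n, d n))"

text \<open>For a closed subset S of a closed subgroup G of GL_2(Z_l), the normalized Haar measure
  of S is the limit of |S mod l^n| / |G mod l^n|.\<close>
definition haar :: "nat \<Rightarrow> zmat set \<Rightarrow> zmat set \<Rightarrow> real" where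
  "haar l G S = lim (\<lambda>n. real (card (red l n ` S)) / real (card (red l n ` G)))"

definition mu :: "nat \<Rightarrow> zmat set \<Rightarrow> nat \<Rightarrow> nat \<Rightarrow> real" where
  "mu l G a b = haar l G (Mab l G a b)"

end

theory Submission
  imports Defs "HOL-Number_Theory.Cong"
begin


lemma Zl_range: "x \<in> Zl l \<Longrightarrow> 0 \<le> x n \<and> x n < int l ^ n"
  by (simp add: Zl_def)

lemma Zl_mod: assumes "x \<in> Zl l" "k \<le> j" "l > 0" shows "x j mod (int l ^ k) = x k"
  using assms(2)
proof (induction j)
  case 0 then show ?case using Zl_range[OF assms(1), of 0] by simp
next
  case (Suc j)
  show ?case
  proof (cases "k = Suc j")
    case True then show ?thesis using Zl_range[OF assms(1), of k] by simp
  next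
    case False
    then have "k \<le> j" using Suc by simp
    have d: "int l ^ k dvd int l ^ j" using \<open>k \<le> j\<close> by (simp add: le_imp_power_dvd)
    have "x (Suc j) mod int l ^ k = (x (Suc j) mod int l ^ j) mod int l ^ k"
      using d by (simp add: mod_mod_cancel)
    also have "\<dots> = x j mod int l ^ k" using assms(1) by (simp add: Zl_def)
    finally show ?thesis using Suc.IH \<open>k \<le> j\<close> by simp
  qed
qed

lemma Zl_modI:
  assumes "l > 0" "\<And>n. F (Suc n) mod int l ^ n = F n mod int l ^ n"
  shows "(\<lambda>n. F n mod int l ^ n) \<in> Zl l"
proof -
  have "(F (Suc n) mod int l ^ Suc n) mod int l ^ n = F n mod int l ^ n" for n
  proof -
    have d: "int l ^ n dvd int l ^ Suc n" by simp
    then show ?thesis using assms(2)[of n] by (simp add: mod_mod_cancel)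
  qed
  then show ?thesis using assms(1) by (simp add: Zl_def)
qed

definition zemb :: "nat \<Rightarrow> int \<Rightarrow> zl" where "zemb l z = (\<lambda>n. z mod int l ^ n)"

lemma zemb_Zl: "l > 0 \<Longrightarrow> zemb l z \<in> Zl l"
  unfolding zemb_def by (rule Zl_modI) auto

lemma zadd_Zl: "l > 0 \<Longrightarrow> x \<in> Zl l \<Longrightarrow> y \<in> Zl l \<Longrightarrow> zadd l x y \<in> Zl l"
  unfolding zadd_def
  apply (rule Zl_modI, simp)
  by (rule mod_add_cong) (simp_all add: Zl_mod)

lemma zsub_Zl: "l > 0 \<Longrightarrow> x \<in> Zl l \<Longrightarrow> y \<in> Zl l \<Longrightarrow> zsub l x y \<in> Zl l"
  unfolding zsub_def
  apply (rule Zl_modI, simp)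
  by (rule mod_diff_cong) (simp_all add: Zl_mod)

lemma zmul_Zl: "l > 0 \<Longrightarrow> x \<in> Zl l \<Longrightarrow> y \<in> Zl l \<Longrightarrow> zmul l x y \<in> Zl l"
  unfolding zmul_def
  apply (rule Zl_modI, simp)
  by (rule mod_mult_cong) (simp_all add: Zl_mod)

lemma zneg_Zl: "l > 0 \<Longrightarrow> x \<in> Zl l \<Longrightarrow> zneg l x \<in> Zl l"
  unfolding zneg_def
  apply (rule Zl_modI, simp)
  by (rule mod_minus_cong) (simp_all add: Zl_mod)

lemma zzero_Zl: "l > 0 \<Longrightarrow> zzero \<in> Zl l"
  by (simp add: Zl_def zzero_def)

lemma zone_Zl: "l > 0 \<Longrightarrow> zone l \<in> Zl l"
  unfolding zone_def by (rule Zl_modI) auto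



lemma coprime_pow_l: assumes "prime l" "\<not> int l dvd X" shows "coprime X (int l ^ n)"
proof -
  have "prime (int l)" using assms(1) by simp
  then have "coprime (int l) X" using assms(2) by (simp add: prime_imp_coprime)
  then show ?thesis by (simp add: coprime_commute)
qed

lemma inv_mod_exists: assumes "coprime X (m::int)" "m > 0"
  shows "\<exists>z. 0 \<le> z \<and> z < m \<and> (X * z) mod m = 1 mod m"
proof -
  obtain z where "[X * z = 1] (mod m)" using cong_solve_coprime_int[OF assms(1)] by blast
  then have "(X * (z mod m)) mod m = 1 mod m" by (simp add: cong_def mod_mult_right_eq)
  then show ?thesis using assms(2) by (intro exI[of _ "z mod m"]) simp
qed

lemma inv_mod_unique: assumes "(X * z) mod m = 1 mod m" "(X * w) mod m = 1 mod (m::int)"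
  shows "z mod m = w mod m"
proof -
  have "z mod m = (z * ((X * w) mod m)) mod m" using assms(2) by (simp add: mod_mult_right_eq)
  also have "\<dots> = ((X * z) * w) mod m" by (simp add: mod_mult_right_eq ac_simps)
  also have "\<dots> = (((X * z) mod m) * w) mod m" by (simp add: mod_mult_left_eq)
  also have "\<dots> = w mod m" using assms(1) by (simp add: mod_mult_left_eq)
  finally show ?thesis .
qed

lemma zunit_iff: assumes "prime l"
  shows "zunit l x \<longleftrightarrow> x \<in> Zl l \<and> \<not> int l dvd x 1"
proof
  have l1: "int l > 1" using assms prime_gt_1_nat by auto
  assume "zunit l x"
  then obtain y where x: "x \<in> Zl l" and y: "y \<in> Zl l" and e: "zmul l x y = zone l"
    by (auto simp: zunit_def)
  have "(x 1 * y 1) mod int l = 1" using fun_cong[OF e, of 1] l1 by (simp add: zmul_def zone_def)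
  then have "\<not> int l dvd x 1" using l1 by auto
  with x show "x \<in> Zl l \<and> \<not> int l dvd x 1" by simp
next
  have l0: "l > 0" using assms prime_gt_0_nat by auto
  assume A: "x \<in> Zl l \<and> \<not> int l dvd x 1"
  then have x: "x \<in> Zl l" by simp
  have cop: "coprime (x n) (int l ^ n)" for n
  proof (cases n)
    case 0 then show ?thesis by simp
  next
    case (Suc m)
    have "x n mod int l = x 1" using Zl_mod[OF x, of 1 n] l0 Suc by simp
    then have "\<not> int l dvd x n" using A by (metis dvd_eq_mod_eq_0 mod_mod_trivial)
    then show ?thesis using coprime_pow_l assms by blast
  qed
  define y where "y = (\<lambda>n. SOME z. 0 \<le> z \<and> z < int l ^ n \<and> (x n * z) mod int l ^ n = 1 mod int l ^ n)"
  have yP: "0 \<le> y n \<and> y n < int l ^ n \<and> (x n * y n) mod int l ^ n = 1 mod int l ^ n" for n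
    unfolding y_def by (rule someI_ex, rule inv_mod_exists[OF cop]) (use l0 in simp)
  have "y \<in> Zl l"
  proof -
    have "y (Suc n) mod int l ^ n = y n" for n
    proof -
      have "(x n * y (Suc n)) mod int l ^ n = 1 mod int l ^ n"
      proof -
        have "(x n * y (Suc n)) mod int l ^ n = ((x (Suc n) mod int l ^ n) * y (Suc n)) mod int l ^ n"
          using Zl_mod[OF x, of n "Suc n"] l0 by simp
        also have "\<dots> = (x (Suc n) * y (Suc n)) mod int l ^ n" by (simp add: mod_mult_left_eq)
        also have "\<dots> = ((x (Suc n) * y (Suc n)) mod int l ^ Suc n) mod int l ^ n"
          by (simp add: mod_mod_cancel)
        also have "\<dots> = (1 mod int l ^ Suc n) mod int l ^ n" using yP[of "Suc n"] by simp
        also have "\<dots> = 1 mod int l ^ n" by (simp add: mod_mod_cancel)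
        finally show ?thesis .
      qed
      then have "y (Suc n) mod int l ^ n = y n mod int l ^ n" using inv_mod_unique yP by blast
      then show ?thesis using yP[of n] by simp
    qed
    then show ?thesis using yP by (simp add: Zl_def)
  qed
  moreover have "zmul l x y = zone l" using yP by (auto simp: zmul_def zone_def)
  ultimately show "zunit l x" using x by (auto simp: zunit_def)
qed



definition qq :: "nat \<Rightarrow> nat \<Rightarrow> int \<Rightarrow> rat" where
  "qq l j U = of_int U / of_nat l ^ j"

lemma frac_div: assumes "m > 0" shows "frac (of_int A / of_int m :: rat) = of_int (A mod m) / of_int m"
proof -
  have "of_int A / of_int m - of_int (A mod m) / of_int m = (of_int (A div m) :: rat)"
  proof -
    have "A = m * (A div m) + A mod m" by simp
    then have "(of_int A :: rat) = of_int m * of_int (A div m) + of_int (A mod m)"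
      by (metis of_int_add of_int_mult)
    then show ?thesis using assms by (simp add: field_simps)
  qed
  moreover have "0 \<le> (of_int (A mod m) / of_int m :: rat)" using assms by simp
  moreover have "(of_int (A mod m) / of_int m :: rat) < 1" using assms by simp
  ultimately show ?thesis unfolding frac_unique_iff by (metis Ints_of_int)
qed

lemma frac_qq: "l > 0 \<Longrightarrow> frac (qq l j A) = qq l j (A mod int l ^ j)"
  using frac_div[of "int l ^ j" A] by (simp add: qq_def)

lemma act_level: assumes x: "x \<in> Zl l" and l0: "l > 0"
  shows "act l x (qq l j U) = qq l j ((x j * U) mod int l ^ j)"
proof -
  define q where "q = qq l j U"
  have qj: "q * of_nat l ^ j \<in> \<int>" using l0 by (simp add: q_def qq_def)
  define k where "k = lvl l q"
  have kj: "k \<le> j" unfolding k_def lvl_def by (rule Least_le) (rule qj)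
  have qk: "q * of_nat l ^ k \<in> \<int>" unfolding k_def lvl_def by (rule LeastI) (rule qj)
  have xj: "x j = x k + int l ^ k * (x j div int l ^ k)"
    using Zl_mod[OF x kj l0] by (metis add.commute mult_div_mod_eq)
  have "of_int (x j) * q = of_int (x k) * q + of_int (x j div int l ^ k) * (q * of_nat l ^ k)"
    by (subst xj) (simp add: algebra_simps)
  moreover have "of_int (x j div int l ^ k) * (q * of_nat l ^ k) \<in> \<int>" using qk by simp
  ultimately have "frac (of_int (x j) * q) = frac (of_int (x k) * q)"
    by (simp add: frac_add_int_right)
  moreover have "of_int (x j) * q = qq l j (x j * U)" by (simp add: q_def qq_def)
  ultimately have "frac (of_int (x k) * q) = qq l j ((x j * U) mod int l ^ j)"
    using frac_qq[OF l0] by simp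
  then show ?thesis by (simp add: act_def k_def q_def)
qed

lemma qadd_qq: "l > 0 \<Longrightarrow> qadd (qq l j A) (qq l j B) = qq l j ((A + B) mod int l ^ j)"
  unfolding qadd_def using frac_qq[of l j "A + B"] by (simp add: qq_def add_divide_distrib)

lemma qq_inj: "l > 0 \<Longrightarrow> qq l j A = qq l j B \<longleftrightarrow> A = B"
  by (simp add: qq_def)

lemma qq_QZ: assumes "l > 0" "0 \<le> A" "A < int l ^ j" shows "qq l j A \<in> QZ l"
proof -
  have "(of_int A :: rat) < of_nat l ^ j"
    using assms by (metis of_int_less_iff of_int_of_nat_eq of_nat_power)
  moreover have "qq l j A * of_nat l ^ j = of_int A" using assms by (simp add: qq_def)
  ultimately show ?thesis using assms unfolding QZ_def
    by (intro CollectI conjI exI[of _ j]) (auto simp: qq_def)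
qed

lemma QZ_rep: assumes "u \<in> QZ l" "l > 0"
  shows "\<exists>k. \<forall>j\<ge>k. \<exists>U. 0 \<le> U \<and> U < int l ^ j \<and> u = qq l j U"
proof -
  obtain k where k: "u * of_nat l ^ k \<in> \<int>" using assms by (auto simp: QZ_def)
  have "\<exists>U. 0 \<le> U \<and> U < int l ^ j \<and> u = qq l j U" if "j \<ge> k" for j
  proof -
    have "u * of_nat l ^ j = (u * of_nat l ^ k) * of_nat l ^ (j - k)"
      using that by (simp add: power_add[symmetric])
    moreover have "(u * of_nat l ^ k) * of_nat l ^ (j - k) \<in> \<int>"
      by (rule Ints_mult[OF k Ints_power[OF Ints_of_nat]])
    ultimately have "u * of_nat l ^ j \<in> \<int>" by metis
    then obtain U where U: "u * of_nat l ^ j = of_int U" by (auto elim: Ints_cases)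
    have pos: "(of_nat l ^ j :: rat) > 0" using assms by simp
    have u: "u = qq l j U" using U pos by (simp add: qq_def field_simps)
    have "0 \<le> u" "u < 1" using assms by (auto simp: QZ_def)
    then have "0 \<le> (of_int U :: rat)" "(of_int U :: rat) < of_nat l ^ j"
      using U pos by (simp_all add: U[symmetric])
    then have "0 \<le> U" "U < int l ^ j"
      by (simp, metis of_int_less_iff of_int_of_nat_eq of_nat_power)
    then show ?thesis using u by blast
  qed
  then show ?thesis by blast
qed

lemma QZ2_rep: assumes "u \<in> QZ l" "v \<in> QZ l" "l > 0"
  shows "\<exists>k. \<forall>j\<ge>k. \<exists>U V. 0 \<le> U \<and> U < int l ^ j \<and> u = qq l j U \<and> 0 \<le> V \<and> V < int l ^ j \<and> v = qq l j V"
proof -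
  obtain k1 where k1: "\<forall>j\<ge>k1. \<exists>U. 0 \<le> U \<and> U < int l ^ j \<and> u = qq l j U" using QZ_rep assms by blast
  obtain k2 where k2: "\<forall>j\<ge>k2. \<exists>U. 0 \<le> U \<and> U < int l ^ j \<and> v = qq l j U" using QZ_rep assms by blast
  show ?thesis using k1 k2 by (intro exI[of _ "max k1 k2"]) auto
qed



definition imul :: "int \<Rightarrow> int \<times> int \<times> int \<times> int \<Rightarrow> int \<times> int \<times> int \<times> int \<Rightarrow> int \<times> int \<times> int \<times> int" where
  "imul m A B = (case A of (a,b,c,d) \<Rightarrow> case B of (e,f,g,h) \<Rightarrow>
     ((a*e+b*g) mod m, (a*f+b*h) mod m, (c*e+d*g) mod m, (c*f+d*h) mod m))"

definition zI :: "nat \<Rightarrow> zmat" where "zI l = (zone l, zzero, zzero, zone l)"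

lemma red_mmul: "red l n (mmul l M N) = imul (int l ^ n) (red l n M) (red l n N)"
  by (cases M; cases N) (simp add: red_def mmul_def imul_def zadd_def zmul_def mod_add_eq)

lemma mat_in_mmul: "l > 0 \<Longrightarrow> mat_in l M \<Longrightarrow> mat_in l N \<Longrightarrow> mat_in l (mmul l M N)"
  by (cases M; cases N) (simp add: mat_in_def mmul_def zadd_Zl zmul_Zl)

lemma red_eq: "(\<And>n. red l n M = red l n N) \<Longrightarrow> M = N"
  by (cases M; cases N) (auto simp: red_def fun_eq_iff)

lemma red_zI: "red l n (zI l) = (1 mod int l ^ n, 0, 0, 1 mod int l ^ n)"
  by (simp add: red_def zI_def zone_def zzero_def)

lemma mat_in_zI: "l > 0 \<Longrightarrow> mat_in l (zI l)"
  by (simp add: mat_in_def zI_def zone_Zl zzero_Zl)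

lemma mmi1: "(x * (y mod m) + z) mod m = (x * y + z) mod (m::int)"
  by (rule mod_add_cong) (simp_all add: mod_mult_right_eq)
lemma mmi2: "(z + x * (y mod m)) mod m = (z + x * y) mod (m::int)"
  by (rule mod_add_cong) (simp_all add: mod_mult_right_eq)
lemma mmi3: "((y mod m) * x + z) mod m = (y * x + z) mod (m::int)"
  by (rule mod_add_cong) (simp_all add: mod_mult_left_eq)
lemma mmi4: "(z + (y mod m) * x) mod m = (z + y * x) mod (m::int)"
  by (rule mod_add_cong) (simp_all add: mod_mult_left_eq)
lemma mmi5: "(x * (y mod m) - z) mod m = (x * y - z) mod (m::int)"
  by (rule mod_diff_cong) (simp_all add: mod_mult_right_eq)
lemma mmi6: "(z - x * (y mod m)) mod m = (z - x * y) mod (m::int)"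
  by (rule mod_diff_cong) (simp_all add: mod_mult_right_eq)
lemma mmi7: "((y mod m) * x - z) mod m = (y * x - z) mod (m::int)"
  by (rule mod_diff_cong) (simp_all add: mod_mult_left_eq)
lemma mmi8: "(z - (y mod m) * x) mod m = (z - y * x) mod (m::int)"
  by (rule mod_diff_cong) (simp_all add: mod_mult_left_eq)
lemmas mmi = mmi1 mmi2 mmi3 mmi4 mmi5 mmi6 mmi7 mmi8

lemma imul_assoc: "imul m (imul m A B) C = imul m A (imul m B C)"
proof -
  obtain a b c d where A: "A = (a,b,c,d)" by (cases A) auto
  obtain e f g h where B: "B = (e,f,g,h)" by (cases B) auto
  obtain p q r s where C: "C = (p,q,r,s)" by (cases C) auto
  show ?thesis unfolding A B C imul_def
    by (simp add: mod_simps mmi) (simp add: algebra_simps)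
qed

lemma imul_I_left: "imul m (1 mod m, 0, 0, 1 mod m) (a,b,c,d) = (a mod m, b mod m, c mod m, d mod m)"
  by (simp add: imul_def mod_simps)

lemma imul_I_right: "imul m (a,b,c,d) (1 mod m, 0, 0, 1 mod m) = (a mod m, b mod m, c mod m, d mod m)"
  by (simp add: imul_def mod_simps)

lemma red_range: "mat_in l M \<Longrightarrow> red l n M = (a,b,c,d) \<Longrightarrow>
   (a mod int l ^ n, b mod int l ^ n, c mod int l ^ n, d mod int l ^ n) = (a,b,c,d)"
  by (cases M) (auto simp: red_def mat_in_def Zl_def)

lemma mact_level: assumes "mat_in l M" "l > 0" "M = (a,b,c,d)"
  shows "mact l M (qq l j U, qq l j V) =
     (qq l j ((a j * U + b j * V) mod int l ^ j), qq l j ((c j * U + d j * V) mod int l ^ j))"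
  using assms by (simp add: mact_def mat_in_def act_level qadd_qq mod_add_eq)

lemma mact_comp_level: assumes "mat_in l A" "mat_in l B" "l > 0"
  shows "mact l (mmul l A B) (qq l j U, qq l j V) = mact l A (mact l B (qq l j U, qq l j V))"
proof -
  obtain a b c d where A: "A = (a,b,c,d)" by (cases A) auto
  obtain e f g h where B: "B = (e,f,g,h)" by (cases B) auto
  have mm: "mmul l A B = (zadd l (zmul l a e) (zmul l b g), zadd l (zmul l a f) (zmul l b h),
      zadd l (zmul l c e) (zmul l d g), zadd l (zmul l c f) (zmul l d h))"
    by (simp add: A B mmul_def)
  have mi: "mat_in l (mmul l A B)" using mat_in_mmul assms by blast
  show ?thesis
    apply (subst mact_level[OF mi assms(3) mm])
    apply (subst mact_level[OF assms(2,3) B])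
    apply (subst mact_level[OF assms(1,3) A])
    apply (simp add: qq_inj[OF assms(3)] zadd_def zmul_def mod_simps mmi)
    apply (simp add: algebra_simps)
    done
qed

lemma mact_I_level: assumes "l > 0" "0 \<le> U" "U < int l ^ j" "0 \<le> V" "V < int l ^ j"
  shows "mact l (zI l) (qq l j U, qq l j V) = (qq l j U, qq l j V)"
  apply (subst mact_level[OF mat_in_zI[OF assms(1)] assms(1) zI_def])
  using assms by (simp add: zone_def zzero_def qq_inj mod_simps)

lemma mact_QZ_level: assumes "mat_in l M" "l > 0"
  shows "mact l M (qq l j U, qq l j V) \<in> QZ l \<times> QZ l"
proof -
  obtain a b c d where A: "M = (a,b,c,d)" by (cases M) auto
  have p: "int l ^ j > 0" using assms by simp
  show ?thesis by (simp add: mact_level[OF assms A]) (intro conjI qq_QZ[OF assms(2)] pos_mod_sign pos_mod_bound p)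
qed

lemma mact_add_level: assumes "mat_in l M" "l > 0"
  shows "mact l M (qadd (qq l j U) (qq l j U'), qadd (qq l j V) (qq l j V')) =
    (qadd (fst (mact l M (qq l j U, qq l j V))) (fst (mact l M (qq l j U', qq l j V'))),
     qadd (snd (mact l M (qq l j U, qq l j V))) (snd (mact l M (qq l j U', qq l j V'))))"
proof -
  obtain a b c d where A: "M = (a,b,c,d)" by (cases M) auto
  show ?thesis
    apply (simp add: qadd_qq[OF assms(2)] mact_level[OF assms A] qq_inj[OF assms(2)] mod_simps mmi)
    apply (simp add: algebra_simps)
    done
qed



lemma GL2_inv: assumes "prime l" "P \<in> GL2 l"
  shows "\<exists>Q. mat_in l Q \<and> mmul l P Q = zI l \<and> mmul l Q P = zI l"
proof -
  have l0: "l > 0" using assms prime_gt_0_nat by auto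
  obtain a b c d where P: "P = (a,b,c,d)" by (cases P) auto
  have abcd: "a \<in> Zl l" "b \<in> Zl l" "c \<in> Zl l" "d \<in> Zl l" using assms(2) by (auto simp: GL2_def mat_in_def P)
  have "zunit l (mdet l P)" using assms(2) by (simp add: GL2_def)
  then obtain e where e: "e \<in> Zl l" "zmul l (mdet l P) e = zone l" by (auto simp: zunit_def)
  define Q where "Q = (zmul l d e, zneg l (zmul l b e), zneg l (zmul l c e), zmul l a e)"
  have Qin: "mat_in l Q" using abcd e l0 by (simp add: Q_def mat_in_def zmul_Zl zneg_Zl)
  have key: "((a n * d n - b n * c n) * e n) mod int l ^ n = 1 mod int l ^ n" for n
    using fun_cong[OF e(2), of n] by (simp add: P mdet_def zmul_def zsub_def zone_def mod_simps)
  have "red l n (mmul l P Q) = red l n (zI l)" for n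
    unfolding red_mmul red_zI using key[of n]
    by (simp add: P Q_def red_def imul_def zmul_def zneg_def mod_simps mmi) (simp add: algebra_simps)
  moreover have "red l n (mmul l Q P) = red l n (zI l)" for n
    unfolding red_mmul red_zI using key[of n]
    by (simp add: P Q_def red_def imul_def zmul_def zneg_def mod_simps mmi) (simp add: algebra_simps)
  ultimately show ?thesis using Qin red_eq by blast
qed

lemma common_level: assumes "p \<in> QZ l \<times> QZ l" "p' \<in> QZ l \<times> QZ l" "l > 0"
  shows "\<exists>j U V U' V'. 0 \<le> U \<and> U < int l ^ j \<and> 0 \<le> V \<and> V < int l ^ j \<and>
     0 \<le> U' \<and> U' < int l ^ j \<and> 0 \<le> V' \<and> V' < int l ^ j \<and>
     p = (qq l j U, qq l j V) \<and> p' = (qq l j U', qq l j V')"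
proof -
  obtain k1 where k1: "\<forall>j\<ge>k1. \<exists>U V. 0 \<le> U \<and> U < int l ^ j \<and> fst p = qq l j U \<and> 0 \<le> V \<and> V < int l ^ j \<and> snd p = qq l j V"
    using QZ2_rep[of "fst p" l "snd p"] assms by (cases p) auto
  obtain k2 where k2: "\<forall>j\<ge>k2. \<exists>U V. 0 \<le> U \<and> U < int l ^ j \<and> fst p' = qq l j U \<and> 0 \<le> V \<and> V < int l ^ j \<and> snd p' = qq l j V"
    using QZ2_rep[of "fst p'" l "snd p'"] assms by (cases p') auto
  obtain U V where 1: "0 \<le> U \<and> U < int l ^ (max k1 k2) \<and> fst p = qq l (max k1 k2) U \<and> 0 \<le> V \<and> V < int l ^ (max k1 k2) \<and> snd p = qq l (max k1 k2) V"
    using k1[rule_format, of "max k1 k2"] by auto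
  obtain U' V' where 2: "0 \<le> U' \<and> U' < int l ^ (max k1 k2) \<and> fst p' = qq l (max k1 k2) U' \<and> 0 \<le> V' \<and> V' < int l ^ (max k1 k2) \<and> snd p' = qq l (max k1 k2) V'"
    using k2[rule_format, of "max k1 k2"] by auto
  show ?thesis using 1 2 by (intro exI[of _ "max k1 k2"] exI[of _ U] exI[of _ V] exI[of _ U'] exI[of _ V']) (auto simp: prod_eq_iff)
qed

lemma one_level: assumes "p \<in> QZ l \<times> QZ l" "l > 0"
  shows "\<exists>j U V. 0 \<le> U \<and> U < int l ^ j \<and> 0 \<le> V \<and> V < int l ^ j \<and> p = (qq l j U, qq l j V)"
  using common_level[OF assms(1) assms] by blast

lemma mact_comp: assumes "mat_in l A" "mat_in l B" "l > 0" "p \<in> QZ l \<times> QZ l"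
  shows "mact l (mmul l A B) p = mact l A (mact l B p)"
  using one_level[OF assms(4,3)] mact_comp_level[OF assms(1-3)] by auto

lemma mact_QZ: assumes "mat_in l M" "l > 0" "p \<in> QZ l \<times> QZ l"
  shows "mact l M p \<in> QZ l \<times> QZ l"
  using one_level[OF assms(3,2)] mact_QZ_level[OF assms(1,2)] by auto

lemma mact_I: assumes "l > 0" "p \<in> QZ l \<times> QZ l" shows "mact l (zI l) p = p"
  using one_level[OF assms(2,1)] mact_I_level[OF assms(1)] by auto

lemma mact_inv: assumes "mat_in l P" "mat_in l Q" "l > 0" "mmul l Q P = zI l" "p \<in> QZ l \<times> QZ l"
  shows "mact l Q (mact l P p) = p"
  using mact_comp[OF assms(2,1,3,5)] assms(4) mact_I[OF assms(3,5)] by simp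

lemma qadd_level: "l > 0 \<Longrightarrow> qadd (qq l j U) (qq l j U') = qq l j ((U + U') mod int l ^ j)"
  by (rule qadd_qq)

lemma mact_add: assumes "mat_in l M" "l > 0" "p \<in> QZ l \<times> QZ l" "p' \<in> QZ l \<times> QZ l"
  shows "mact l M (qadd (fst p) (fst p'), qadd (snd p) (snd p')) =
    (qadd (fst (mact l M p)) (fst (mact l M p')), qadd (snd (mact l M p)) (snd (mact l M p')))"
  using common_level[OF assms(3,4,2)] mact_add_level[OF assms(1,2)] by auto



definition Dset :: "nat \<Rightarrow> nat \<Rightarrow> rat set" where
  "Dset l i = {qq l i m | m. 0 \<le> m \<and> m < int l ^ i}"

definition Agrp :: "nat \<Rightarrow> nat \<Rightarrow> nat \<Rightarrow> (int \<times> int) monoid" where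
  "Agrp l i j = DirProd (integer_mod_group (l ^ i)) (integer_mod_group (l ^ j))"

lemma qq_lift: "i \<le> j \<Longrightarrow> l > 0 \<Longrightarrow> qq l i m = qq l j (m * int l ^ (j - i))"
proof -
  assume a: "i \<le> j" "l > 0"
  have "(of_nat l ^ j :: rat) = of_nat l ^ i * of_nat l ^ (j - i)" using a by (simp add: power_add[symmetric])
  then show ?thesis using a by (simp add: qq_def field_simps)
qed

lemma dvd_Dset: assumes "i \<le> j" "l > 0" "0 \<le> U" "U < int l ^ j"
  shows "(int l ^ (j - i) dvd U) \<longleftrightarrow> qq l j U \<in> Dset l i"
proof
  have pj: "int l ^ j = int l ^ (j - i) * int l ^ i" using assms(1) by (simp add: power_add[symmetric])
  have p0: "int l ^ (j - i) > 0" using assms by simp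
  assume "int l ^ (j - i) dvd U"
  then obtain m where U: "U = int l ^ (j - i) * m" by blast
  have "0 \<le> m" using U assms(3) p0 by (simp add: zero_le_mult_iff)
  moreover have "m < int l ^ i" using U assms(4) pj p0 by (metis mult_less_cancel_left_pos)
  moreover have "qq l j U = qq l i m" using qq_lift[OF assms(1,2), of m] U by (simp add: ac_simps)
  ultimately show "qq l j U \<in> Dset l i" by (auto simp: Dset_def)
next
  assume "qq l j U \<in> Dset l i"
  then obtain m where m: "qq l j U = qq l i m" by (auto simp: Dset_def)
  then have "U = m * int l ^ (j - i)" using qq_lift[OF assms(1,2), of m] qq_inj[OF assms(2)] by simp
  then show "int l ^ (j - i) dvd U" by simp
qed

lemma Dset_QZ: "l > 0 \<Longrightarrow> Dset l i \<subseteq> QZ l"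
  by (auto simp: Dset_def intro: qq_QZ)

lemma mod_eq_self_iff: "0 \<le> U \<Longrightarrow> U < m \<Longrightarrow> (X mod m = U) \<longleftrightarrow> ((X - U) mod m = (0::int))"
proof -
  assume a: "0 \<le> U" "U < m"
  then have "U mod m = U" by simp
  then have "(X mod m = U) \<longleftrightarrow> (X mod m = U mod m)" by simp
  also have "\<dots> \<longleftrightarrow> m dvd (X - U)" by (rule mod_eq_dvd_iff)
  also have "\<dots> \<longleftrightarrow> (X - U) mod m = 0" by (rule dvd_eq_mod_eq_0)
  finally show ?thesis .
qed

lemma ker_char:
  assumes M: "M = (a,b,c,d)" and mi: "mat_in l M" and l0: "l > 0" and J: "i1 \<le> J" "i2 \<le> J"
  and H: "\<And>j U V. j \<ge> J \<Longrightarrow> 0 \<le> U \<Longrightarrow> U < int l ^ j \<Longrightarrow> 0 \<le> V \<Longrightarrow> V < int l ^ j \<Longrightarrow>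
     ((((a j - 1) * U + b j * V) mod int l ^ j = 0 \<and> (c j * U + (d j - 1) * V) mod int l ^ j = 0)
      \<longleftrightarrow> (int l ^ (j - i1) dvd U \<and> int l ^ (j - i2) dvd V))"
  shows "carrier (ker_group l M) = Dset l i1 \<times> Dset l i2"
proof -
  have fix_iff: "mact l M (qq l j U, qq l j V) = (qq l j U, qq l j V) \<longleftrightarrow> (qq l j U \<in> Dset l i1 \<and> qq l j V \<in> Dset l i2)"
    if "j \<ge> J" "0 \<le> U" "U < int l ^ j" "0 \<le> V" "V < int l ^ j" for j U V
  proof -
    have "mact l M (qq l j U, qq l j V) = (qq l j U, qq l j V) \<longleftrightarrow>
       ((a j * U + b j * V) mod int l ^ j = U \<and> (c j * U + d j * V) mod int l ^ j = V)"
      by (simp add: mact_level[OF mi l0 M] qq_inj[OF l0])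
    also have "\<dots> \<longleftrightarrow> ((((a j - 1) * U + b j * V) mod int l ^ j = 0 \<and> (c j * U + (d j - 1) * V) mod int l ^ j = 0))"
    proof -
      have t1: "a j * U + b j * V - U = (a j - 1) * U + b j * V" by (simp add: algebra_simps)
      have t2: "c j * U + d j * V - V = c j * U + (d j - 1) * V" by (simp add: algebra_simps)
      show ?thesis using mod_eq_self_iff[of U "int l ^ j" "a j * U + b j * V"]
         mod_eq_self_iff[of V "int l ^ j" "c j * U + d j * V"] that
        unfolding t1 t2 by simp
    qed
    also have "\<dots> \<longleftrightarrow> (int l ^ (j - i1) dvd U \<and> int l ^ (j - i2) dvd V)" using H[OF that] by blast
    also have "\<dots> \<longleftrightarrow> (qq l j U \<in> Dset l i1 \<and> qq l j V \<in> Dset l i2)"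
    proof -
      have "i1 \<le> j" "i2 \<le> j" using that J by auto
      then show ?thesis using dvd_Dset[of i1 j l U] dvd_Dset[of i2 j l V] that l0 by blast
    qed
    finally show ?thesis .
  qed
  show ?thesis
  proof
    show "carrier (ker_group l M) \<subseteq> Dset l i1 \<times> Dset l i2"
    proof
      fix p assume p: "p \<in> carrier (ker_group l M)"
      then have pq: "p \<in> QZ l \<times> QZ l" and fx: "mact l M p = p" by (auto simp: ker_group_def)
      obtain k where k: "\<forall>j\<ge>k. \<exists>U V. 0 \<le> U \<and> U < int l ^ j \<and> fst p = qq l j U \<and> 0 \<le> V \<and> V < int l ^ j \<and> snd p = qq l j V"
        using QZ2_rep[of "fst p" l "snd p"] pq l0 by (cases p) auto
      obtain U V where UV: "0 \<le> U" "U < int l ^ (max k J)" "fst p = qq l (max k J) U" "0 \<le> V" "V < int l ^ (max k J)" "snd p = qq l (max k J) V"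
        using k[rule_format, of "max k J"] by auto
      have "p = (qq l (max k J) U, qq l (max k J) V)" using UV by (simp add: prod_eq_iff)
      then show "p \<in> Dset l i1 \<times> Dset l i2" using fix_iff[of "max k J" U V] UV fx by auto
    qed
  next
    show "Dset l i1 \<times> Dset l i2 \<subseteq> carrier (ker_group l M)"
    proof
      fix p assume p: "p \<in> Dset l i1 \<times> Dset l i2"
      then obtain m1 m2 where m: "p = (qq l i1 m1, qq l i2 m2)" "0 \<le> m1" "m1 < int l ^ i1" "0 \<le> m2" "m2 < int l ^ i2"
        by (auto simp: Dset_def)
      define U where "U = m1 * int l ^ (J - i1)"
      define V where "V = m2 * int l ^ (J - i2)"
      have pj1: "int l ^ J = int l ^ i1 * int l ^ (J - i1)" using J by (simp add: power_add[symmetric])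
      have pj2: "int l ^ J = int l ^ i2 * int l ^ (J - i2)" using J by (simp add: power_add[symmetric])
      have U: "0 \<le> U" "U < int l ^ J" unfolding U_def using m l0 pj1 by (simp_all add: mult_strict_right_mono)
      have V: "0 \<le> V" "V < int l ^ J" unfolding V_def using m l0 pj2 by (simp_all add: mult_strict_right_mono)
      have pe: "p = (qq l J U, qq l J V)" using m qq_lift[OF J(1) l0] qq_lift[OF J(2) l0] by (simp add: U_def V_def)
      have "p \<in> QZ l \<times> QZ l" using pe U V qq_QZ[OF l0] by simp
      moreover have "mact l M p = p" using fix_iff[of J U V] U V pe p by simp
      ultimately show "p \<in> carrier (ker_group l M)" by (simp add: ker_group_def)
    qed
  qed
qed



lemma carrier_Agrp: "l > 0 \<Longrightarrow> carrier (Agrp l i j) = {0..<int l ^ i} \<times> {0..<int l ^ j}"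
  by (simp add: Agrp_def carrier_integer_mod_group)

lemma group_Agrp: "group (Agrp l i j)"
  by (simp add: Agrp_def DirProd_group)

lemma psi_iso: assumes l0: "l > 0" and C: "carrier (ker_group l M) = Dset l i1 \<times> Dset l i2"
  shows "(\<lambda>(m1, m2). (qq l i1 m1, qq l i2 m2)) \<in> iso (Agrp l i1 i2) (ker_group l M)"
proof -
  let ?f = "(\<lambda>(m1, m2). (qq l i1 m1, qq l i2 m2))"
  have hom: "?f \<in> hom (Agrp l i1 i2) (ker_group l M)"
  proof (rule homI)
    fix x assume "x \<in> carrier (Agrp l i1 i2)"
    then show "?f x \<in> carrier (ker_group l M)" using C l0 by (auto simp: carrier_Agrp Dset_def)
  next
    fix x y assume "x \<in> carrier (Agrp l i1 i2)" "y \<in> carrier (Agrp l i1 i2)"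
    then show "?f (x \<otimes>\<^bsub>Agrp l i1 i2\<^esub> y) = ?f x \<otimes>\<^bsub>ker_group l M\<^esub> ?f y"
      using l0 by (cases x; cases y) (simp add: Agrp_def ker_group_def qadd_qq of_nat_power)
  qed
  have "bij_betw ?f (carrier (Agrp l i1 i2)) (carrier (ker_group l M))"
    unfolding C bij_betw_def
  proof
    show "inj_on ?f (carrier (Agrp l i1 i2))" using qq_inj[OF l0] by (auto simp: inj_on_def)
    show "?f ` carrier (Agrp l i1 i2) = Dset l i1 \<times> Dset l i2"
      using l0 by (auto simp: carrier_Agrp Dset_def image_iff)
  qed
  then show ?thesis using hom by (simp add: iso_def)
qed

lemma pow_DirProd: "(x, y) [^]\<^bsub>G \<times>\<times> H\<^esub> (n::nat) = (x [^]\<^bsub>G\<^esub> n, y [^]\<^bsub>H\<^esub> n)"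
  by (induction n) simp_all

definition Ex :: "('a, 'b) monoid_scheme \<Rightarrow> nat \<Rightarrow> bool" where
  "Ex G N = (\<forall>g\<in>carrier G. g [^]\<^bsub>G\<^esub> N = \<one>\<^bsub>G\<^esub>)"

lemma Ex_iso: assumes "h \<in> iso G H" "group G" "group H" "Ex G N" shows "Ex H N"
  unfolding Ex_def
proof
  fix g assume g: "g \<in> carrier H"
  have hh: "h \<in> hom G H" and bij: "bij_betw h (carrier G) (carrier H)" using assms(1) by (auto simp: iso_def)
  then obtain x where x: "x \<in> carrier G" "g = h x" using g by (auto simp: bij_betw_def)
  interpret group_hom G H h using assms(2,3) hh by (simp add: group_hom_def group_hom_axioms_def)
  have "g [^]\<^bsub>H\<^esub> N = h (x [^]\<^bsub>G\<^esub> N)" using x hom_nat_pow[OF x(1)] by simp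
  also have "\<dots> = \<one>\<^bsub>H\<^esub>" using assms(4) x by (simp add: Ex_def)
  finally show "g [^]\<^bsub>H\<^esub> N = \<one>\<^bsub>H\<^esub>" .
qed

lemma Ex_Agrp: assumes "l > 1" shows "Ex (Agrp l i j) (l ^ k) \<longleftrightarrow> i \<le> k \<and> j \<le> k"
proof
  assume E: "Ex (Agrp l i j) (l ^ k)"
  have ok: "i \<le> k" if E1: "\<forall>m. 0 \<le> m \<and> m < int l ^ i \<longrightarrow> (int l ^ k * m) mod int l ^ i = 0" for i
  proof (rule ccontr)
    assume "\<not> i \<le> k"
    then have lt: "int l ^ k < int l ^ i" using assms by (simp add: power_strict_increasing)
    have "1 < int l ^ i" using assms \<open>\<not> i \<le> k\<close> by (metis le_less_trans lt of_nat_1 of_nat_less_iff one_le_power less_imp_le of_nat_power)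
    then have "(int l ^ k * 1) mod int l ^ i = 0" using E1[rule_format, of 1] by simp
    moreover have "(int l ^ k * 1) mod int l ^ i = int l ^ k" using lt assms by simp
    ultimately show False using assms by simp
  qed
  have "i \<le> k"
  proof (rule ok, intro allI impI)
    fix m assume "0 \<le> m \<and> m < int l ^ i"
    then show "(int l ^ k * m) mod int l ^ i = 0"
      using E[unfolded Ex_def, rule_format, of "(m,0)"] assms
      by (simp add: Agrp_def pow_DirProd carrier_integer_mod_group of_nat_power)
  qed
  moreover have "j \<le> k"
  proof (rule ok, intro allI impI)
    fix m assume "0 \<le> m \<and> m < int l ^ j"
    then show "(int l ^ k * m) mod int l ^ j = 0"
      using E[unfolded Ex_def, rule_format, of "(0,m)"] assms
      by (simp add: Agrp_def pow_DirProd carrier_integer_mod_group of_nat_power)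
  qed
  ultimately show "i \<le> k \<and> j \<le> k" by simp
next
  assume "i \<le> k \<and> j \<le> k"
  then have d: "int l ^ i dvd int l ^ k" "int l ^ j dvd int l ^ k" by (simp_all add: le_imp_power_dvd)
  then show "Ex (Agrp l i j) (l ^ k)" unfolding Ex_def
    by (auto simp: Agrp_def pow_DirProd of_nat_power)
qed

lemma card_Agrp: "l > 0 \<Longrightarrow> card (carrier (Agrp l i j)) = l ^ (i + j)"
  by (simp add: carrier_Agrp power_add nat_power_eq)

lemma Agrp_iso_iff: assumes "l > 1"
  shows "Agrp l i j \<cong> Agrp l a (a + b) \<longleftrightarrow> (i = a \<and> j = a + b) \<or> (i = a + b \<and> j = a)"
proof
  assume iso: "Agrp l i j \<cong> Agrp l a (a + b)"
  then obtain h where h: "h \<in> iso (Agrp l i j) (Agrp l a (a + b))" by (auto simp: is_iso_def)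
  have iso2: "Agrp l a (a + b) \<cong> Agrp l i j" using group.iso_sym[OF group_Agrp iso] .
  then obtain h2 where h2: "h2 \<in> iso (Agrp l a (a + b)) (Agrp l i j)" by (auto simp: is_iso_def)
  have "l ^ (i + j) = l ^ (a + (a + b))" using iso_same_card[OF iso] card_Agrp assms by simp
  then have s: "i + j = a + (a + b)" using assms power_inject_exp by blast
  have "Ex (Agrp l a (a + b)) (l ^ (a + b))" using Ex_Agrp[OF assms] by simp
  then have "Ex (Agrp l i j) (l ^ (a + b))" using Ex_iso[OF h2 group_Agrp group_Agrp] by simp
  then have 1: "i \<le> a + b \<and> j \<le> a + b" using Ex_Agrp[OF assms] by simp
  have "Ex (Agrp l i j) (l ^ (max i j))" using Ex_Agrp[OF assms] by simp
  then have "Ex (Agrp l a (a + b)) (l ^ (max i j))" using Ex_iso[OF h group_Agrp group_Agrp] by simp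
  then have 2: "a + b \<le> max i j" using Ex_Agrp[OF assms] by simp
  show "(i = a \<and> j = a + b) \<or> (i = a + b \<and> j = a)" using 1 2 s by linarith
next
  assume "(i = a \<and> j = a + b) \<or> (i = a + b \<and> j = a)"
  then show "Agrp l i j \<cong> Agrp l a (a + b)"
  proof
    assume "i = a \<and> j = a + b" then show ?thesis by (simp add: iso_refl)
  next
    assume "i = a + b \<and> j = a" then show ?thesis unfolding Agrp_def by (simp add: DirProd_commute_iso)
  qed
qed



definition redd :: "int \<Rightarrow> int \<times> int \<times> int \<times> int \<Rightarrow> bool" where
  "redd m X = (case X of (a,b,c,d) \<Rightarrow> a mod m = a \<and> b mod m = b \<and> c mod m = c \<and> d mod m = d)"

definition iI :: "int \<Rightarrow> int \<times> int \<times> int \<times> int" where "iI m = (1 mod m, 0, 0, 1 mod m)"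

lemma redd_imul: "redd m (imul m A B)"
  by (cases A; cases B) (simp add: redd_def imul_def)

lemma redd_red: "mat_in l M \<Longrightarrow> redd (int l ^ n) (red l n M)"
  by (cases M) (auto simp: redd_def red_def mat_in_def Zl_def)

lemma imul_I_l: "redd m X \<Longrightarrow> imul m (iI m) X = X"
  by (cases X) (simp add: redd_def iI_def imul_I_left)

lemma imul_I_r: "redd m X \<Longrightarrow> imul m X (iI m) = X"
  by (cases X) (simp add: redd_def iI_def imul_I_right)

lemma red_zI': "red l n (zI l) = iI (int l ^ n)"
  by (simp add: red_zI iI_def)

lemma conj_red: assumes "mat_in l N" "mat_in l P" "mat_in l Q" "mat_in l M"
  "mmul l P Q = zI l" "mmul l N P = mmul l P M"
  shows "red l n N = imul (int l ^ n) (imul (int l ^ n) (red l n P) (red l n M)) (red l n Q)"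
proof -
  let ?m = "int l ^ n" and ?r = "red l n"
  have pq: "imul ?m (?r P) (?r Q) = iI ?m" using arg_cong[OF assms(5), of ?r] by (simp add: red_mmul red_zI')
  have np: "imul ?m (?r N) (?r P) = imul ?m (?r P) (?r M)" using arg_cong[OF assms(6), of ?r] by (simp add: red_mmul)
  have "?r N = imul ?m (?r N) (iI ?m)" using imul_I_r[OF redd_red[OF assms(1)]] by simp
  also have "\<dots> = imul ?m (imul ?m (?r N) (?r P)) (?r Q)" by (simp add: pq imul_assoc)
  finally show ?thesis by (simp add: np)
qed

lemma conj_sym: assumes "mat_in l N" "mat_in l P" "mat_in l Q" "mat_in l M"
  "mmul l P Q = zI l" "mmul l Q P = zI l" "mmul l N P = mmul l P M"
  shows "mmul l M Q = mmul l Q N"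
proof (rule red_eq)
  fix n
  let ?m = "int l ^ n" and ?r = "red l n"
  have pq: "imul ?m (?r P) (?r Q) = iI ?m" using arg_cong[OF assms(5), of ?r] by (simp add: red_mmul red_zI')
  have qp: "imul ?m (?r Q) (?r P) = iI ?m" using arg_cong[OF assms(6), of ?r] by (simp add: red_mmul red_zI')
  have np: "imul ?m (?r N) (?r P) = imul ?m (?r P) (?r M)" using arg_cong[OF assms(7), of ?r] by (simp add: red_mmul)
  have "?r (mmul l Q N) = imul ?m (?r Q) (?r N)" by (simp add: red_mmul)
  also have "\<dots> = imul ?m (?r Q) (imul ?m (imul ?m (?r P) (?r M)) (?r Q))"
    using conj_red[OF assms(1-4,5,7)] by simp
  also have "\<dots> = imul ?m (imul ?m (imul ?m (?r Q) (?r P)) (?r M)) (?r Q)" by (simp add: imul_assoc)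
  also have "\<dots> = imul ?m (?r M) (?r Q)" using imul_I_l[OF redd_red[OF assms(4)]] by (simp add: qp)
  finally show "?r (mmul l M Q) = ?r (mmul l Q N)" by (simp add: red_mmul)
qed

lemma ker_transfer: assumes l0: "l > 0" and mi: "mat_in l P" "mat_in l Q" "mat_in l M" "mat_in l N"
  and qp: "mmul l Q P = zI l" and pq: "mmul l P Q = zI l" and np: "mmul l N P = mmul l P M"
  shows "mact l P \<in> iso (ker_group l M) (ker_group l N)"
proof -
  have inv1: "mact l Q (mact l P p) = p" if "p \<in> QZ l \<times> QZ l" for p using mact_inv[OF mi(1,2) l0 qp that] .
  have inv2: "mact l P (mact l Q p) = p" if "p \<in> QZ l \<times> QZ l" for p using mact_inv[OF mi(2,1) l0 pq that] .
  have into: "mact l P p \<in> carrier (ker_group l N)" if p: "p \<in> carrier (ker_group l M)" for p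
  proof -
    have pz: "p \<in> QZ l \<times> QZ l" and fx: "mact l M p = p" using p by (auto simp: ker_group_def)
    have "mact l N (mact l P p) = mact l (mmul l N P) p" using mact_comp[OF mi(4,1) l0 pz] by simp
    also have "\<dots> = mact l P (mact l M p)" using mact_comp[OF mi(1,3) l0 pz] np by simp
    finally show ?thesis using fx mact_QZ[OF mi(1) l0 pz] by (simp add: ker_group_def)
  qed
  have bkw: "mact l Q q \<in> carrier (ker_group l M)" if q: "q \<in> carrier (ker_group l N)" for q
  proof -
    have qz: "q \<in> QZ l \<times> QZ l" and fx: "mact l N q = q" using q by (auto simp: ker_group_def)
    define x where "x = mact l Q q"
    have xz: "x \<in> QZ l \<times> QZ l" using mact_QZ[OF mi(2) l0 qz] by (simp add: x_def)
    have mxz: "mact l M x \<in> QZ l \<times> QZ l" using mact_QZ[OF mi(3) l0 xz] .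
    have px: "mact l P x = q" using inv2[OF qz] by (simp add: x_def)
    have "mact l M x = mact l Q (mact l P (mact l M x))" using inv1[OF mxz] by simp
    also have "\<dots> = mact l Q (mact l (mmul l P M) x)" using mact_comp[OF mi(1,3) l0 xz] by simp
    also have "\<dots> = mact l Q (mact l N (mact l P x))" using mact_comp[OF mi(4,1) l0 xz] np by simp
    also have "\<dots> = x" using px fx by (simp add: x_def)
    finally show ?thesis using xz by (simp add: ker_group_def x_def)
  qed
  have hom: "mact l P \<in> hom (ker_group l M) (ker_group l N)"
  proof (rule homI)
    fix x assume "x \<in> carrier (ker_group l M)" then show "mact l P x \<in> carrier (ker_group l N)" by (rule into)
  next
    fix x y assume "x \<in> carrier (ker_group l M)" "y \<in> carrier (ker_group l M)"
    then have "x \<in> QZ l \<times> QZ l" "y \<in> QZ l \<times> QZ l" by (auto simp: ker_group_def)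
    then show "mact l P (x \<otimes>\<^bsub>ker_group l M\<^esub> y) = mact l P x \<otimes>\<^bsub>ker_group l N\<^esub> mact l P y"
      using mact_add[OF mi(1) l0] by (simp add: ker_group_def)
  qed
  have "bij_betw (mact l P) (carrier (ker_group l M)) (carrier (ker_group l N))"
  proof (rule bij_betw_byWitness[where f' = "mact l Q"])
    show "\<forall>a\<in>carrier (ker_group l M). mact l Q (mact l P a) = a" using inv1 by (auto simp: ker_group_def)
    show "\<forall>a\<in>carrier (ker_group l N). mact l P (mact l Q a) = a" using inv2 by (auto simp: ker_group_def)
    show "mact l P ` carrier (ker_group l M) \<subseteq> carrier (ker_group l N)" using into by blast
    show "mact l Q ` carrier (ker_group l N) \<subseteq> carrier (ker_group l M)" using bkw by blast
  qed
  then show ?thesis using hom by (simp add: iso_def)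
qed

lemma ker_iso_conj: assumes l0: "l > 0" and mi: "mat_in l P" "mat_in l Q" "mat_in l M" "mat_in l N"
  and qp: "mmul l Q P = zI l" and pq: "mmul l P Q = zI l" and np: "mmul l N P = mmul l P M"
  shows "(ker_group l N \<cong> H) \<longleftrightarrow> (ker_group l M \<cong> H)"
  and "ker_group l M \<cong> ker_group l N"
proof -
  have h1: "mact l P \<in> iso (ker_group l M) (ker_group l N)" by (rule ker_transfer[OF assms])
  have mq: "mmul l M Q = mmul l Q N" by (rule conj_sym[OF mi(4,1,2,3) pq qp np])
  have h2: "mact l Q \<in> iso (ker_group l N) (ker_group l M)" by (rule ker_transfer[OF l0 mi(2,1,4,3) pq qp mq])
  have i1: "ker_group l M \<cong> ker_group l N" using h1 by (auto simp: is_iso_def)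
  have i2: "ker_group l N \<cong> ker_group l M" using h2 by (auto simp: is_iso_def)
  show "(ker_group l N \<cong> H) \<longleftrightarrow> (ker_group l M \<cong> H)" using i1 i2 iso_trans by metis
  show "ker_group l M \<cong> ker_group l N" by (rule i1)
qed



lemma conj_card: assumes l0: "l > 0" and mi: "mat_in l P" "mat_in l Q"
  and qp: "mmul l Q P = zI l" and pq: "mmul l P Q = zI l" and S: "\<And>M. M \<in> S \<Longrightarrow> mat_in l M"
  shows "card (red l n ` {N. mat_in l N \<and> (\<exists>M\<in>S. mmul l N P = mmul l P M)}) = card (red l n ` S)"
proof -
  let ?m = "int l ^ n" and ?r = "red l n"
  define g where "g X = imul ?m (imul ?m (?r P) X) (?r Q)" for X
  have pq': "imul ?m (?r P) (?r Q) = iI ?m" using arg_cong[OF pq, of ?r] by (simp add: red_mmul red_zI')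
  have qp': "imul ?m (?r Q) (?r P) = iI ?m" using arg_cong[OF qp, of ?r] by (simp add: red_mmul red_zI')
  have img: "?r ` {N. mat_in l N \<and> (\<exists>M\<in>S. mmul l N P = mmul l P M)} = g ` (?r ` S)"
  proof
    show "?r ` {N. mat_in l N \<and> (\<exists>M\<in>S. mmul l N P = mmul l P M)} \<subseteq> g ` (?r ` S)"
    proof
      fix X assume "X \<in> ?r ` {N. mat_in l N \<and> (\<exists>M\<in>S. mmul l N P = mmul l P M)}"
      then obtain N M where N: "X = ?r N" "mat_in l N" "M \<in> S" "mmul l N P = mmul l P M" by auto
      then have "X = g (?r M)" using conj_red[OF N(2) mi S[OF N(3)] pq N(4)] by (simp add: g_def)
      then show "X \<in> g ` (?r ` S)" using N(3) by auto
    qed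
  next
    show "g ` (?r ` S) \<subseteq> ?r ` {N. mat_in l N \<and> (\<exists>M\<in>S. mmul l N P = mmul l P M)}"
    proof
      fix X assume "X \<in> g ` (?r ` S)"
      then obtain M where M: "M \<in> S" "X = g (?r M)" by auto
      define N where "N = mmul l (mmul l P M) Q"
      have Nin: "mat_in l N" unfolding N_def using mat_in_mmul l0 mi S[OF M(1)] by metis
      have "mmul l N P = mmul l P M"
      proof (rule red_eq)
        fix k
        let ?mk = "int l ^ k" and ?rk = "red l k"
        have qpk: "imul ?mk (?rk Q) (?rk P) = iI ?mk" using arg_cong[OF qp, of ?rk] by (simp add: red_mmul red_zI')
        have "?rk (mmul l N P) = imul ?mk (imul ?mk (imul ?mk (?rk P) (?rk M)) (?rk Q)) (?rk P)"
          by (simp add: N_def red_mmul)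
        also have "\<dots> = imul ?mk (imul ?mk (?rk P) (?rk M)) (iI ?mk)" by (simp add: imul_assoc qpk)
        also have "\<dots> = ?rk (mmul l P M)" using imul_I_r[OF redd_imul] by (simp add: red_mmul)
        finally show "?rk (mmul l N P) = ?rk (mmul l P M)" .
      qed
      moreover have "X = ?r N" using M by (simp add: g_def N_def red_mmul)
      ultimately show "X \<in> ?r ` {N. mat_in l N \<and> (\<exists>M\<in>S. mmul l N P = mmul l P M)}" using Nin M(1) by blast
    qed
  qed
  have "inj_on g (?r ` S)"
  proof (rule inj_onI)
    fix X Y assume X: "X \<in> ?r ` S" and Y: "Y \<in> ?r ` S" and e: "g X = g Y"
    have bkw: "imul ?m (imul ?m (?r Q) (g Z)) (?r P) = Z" if "Z \<in> ?r ` S" for Z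
    proof -
      have rz: "redd ?m Z" using that S redd_red by blast
      have "imul ?m (imul ?m (?r Q) (g Z)) (?r P) = imul ?m (imul ?m (imul ?m (?r Q) (?r P)) Z) (imul ?m (?r Q) (?r P))"
        by (simp only: g_def imul_assoc)
      also have "\<dots> = Z" using rz by (simp only: qp' imul_I_l imul_I_r)
      finally show ?thesis .
    qed
    have "X = imul ?m (imul ?m (?r Q) (g X)) (?r P)" using bkw[OF X] by simp
    also have "\<dots> = imul ?m (imul ?m (?r Q) (g Y)) (?r P)" using e by simp
    also have "\<dots> = Y" using bkw[OF Y] by simp
    finally show "X = Y" .
  qed
  then have "card (g ` (?r ` S)) = card (?r ` S)" by (rule card_image)
  then show ?thesis using img by simp
qed



definition E :: "nat \<Rightarrow> nat \<Rightarrow> int \<Rightarrow> bool" where "E l k X \<longleftrightarrow> (X - 1) mod int l ^ k = 0"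
definition VE :: "nat \<Rightarrow> nat \<Rightarrow> int \<Rightarrow> bool" where "VE l i X \<longleftrightarrow> E l i X \<and> \<not> E l (Suc i) X"
definition V :: "nat \<Rightarrow> nat \<Rightarrow> zl \<Rightarrow> bool" where "V l i x \<longleftrightarrow> E l i (x i) \<and> \<not> E l (Suc i) (x (Suc i))"

lemma E_level: assumes "x \<in> Zl l" "l > 0" "k \<le> j" shows "E l k (x k) \<longleftrightarrow> E l k (x j)"
proof -
  have "(x j - 1) mod int l ^ k = (x j mod int l ^ k - 1) mod int l ^ k" by (simp add: mod_diff_left_eq)
  then show ?thesis using Zl_mod[OF assms(1,3,2)] by (simp add: E_def)
qed

lemma E_mul: assumes "E l j Y" "0 \<le> W" "W < int l ^ j" shows "(Y * W) mod int l ^ j = W"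
proof -
  have "Y mod int l ^ j = 1 mod int l ^ j" using assms(1) by (simp add: E_def mod_eq_dvd_iff dvd_eq_mod_eq_0)
  then have "(Y * W) mod int l ^ j = ((1 mod int l ^ j) * W) mod int l ^ j" by (metis mod_mult_left_eq)
  also have "\<dots> = W mod int l ^ j" by (simp add: mod_mult_left_eq)
  finally show ?thesis using assms(2,3) by simp
qed

lemma E_mono: "E l k X \<Longrightarrow> k' \<le> k \<Longrightarrow> E l k' X"
  unfolding E_def by (metis dvd_eq_mod_eq_0 dvd_trans le_imp_power_dvd)

lemma E_0 [simp]: "E l 0 X" by (simp add: E_def)

lemma V_level: assumes "x \<in> Zl l" "l > 0" "Suc i \<le> j" shows "V l i x \<longleftrightarrow> VE l i (x j)"
  using E_level[OF assms(1,2), of i j] E_level[OF assms(1,2), of "Suc i" j] assms(3)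
  by (simp add: V_def VE_def)

lemma V_unique: "V l i x \<Longrightarrow> V l i' x \<Longrightarrow> x \<in> Zl l \<Longrightarrow> l > 0 \<Longrightarrow> i = i'"
proof -
  assume a: "V l i x" "V l i' x" "x \<in> Zl l" "l > 0"
  let ?j = "Suc (max i i')"
  have "VE l i (x ?j)" using V_level[OF a(3,4), of i ?j] a(1) by simp
  moreover have "VE l i' (x ?j)" using V_level[OF a(3,4), of i' ?j] a(2) by simp
  ultimately
  show "i = i'" unfolding VE_def by (metis E_mono not_less_eq_eq nle_le)
qed

lemma no_V_all: assumes "\<not> (\<exists>i. V l i x)" shows "E l k (x k)"
proof (induction k)
  case 0 then show ?case by simp
next
  case (Suc k) then show ?case using assms by (auto simp: V_def)
qed

lemma VAL: assumes l: "prime l" and w: "int l ^ i dvd w" "\<not> int l ^ Suc i dvd w" and ij: "i < j"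
  shows "(w * U) mod int l ^ j = 0 \<longleftrightarrow> int l ^ (j - i) dvd U"
proof -
  obtain w' where w': "w = int l ^ i * w'" using w(1) by blast
  have nd: "\<not> int l dvd w'" using w(2) w' by auto
  have l0: "int l \<noteq> 0" using l by auto
  have pj: "int l ^ j = int l ^ i * int l ^ (j - i)" using ij by (simp add: power_add[symmetric])
  have "(w * U) mod int l ^ j = 0 \<longleftrightarrow> int l ^ i * int l ^ (j - i) dvd int l ^ i * (w' * U)"
    by (simp add: w' pj dvd_eq_mod_eq_0[symmetric] ac_simps)
  also have "\<dots> \<longleftrightarrow> int l ^ (j - i) dvd w' * U" using l0 by simp
  also have "\<dots> \<longleftrightarrow> int l ^ (j - i) dvd U"
    using coprime_pow_l[OF l nd, of "j - i"] by (simp add: coprime_commute coprime_dvd_mult_right_iff)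
  finally show ?thesis .
qed

lemma V_dvd: assumes "V l i x" "x \<in> Zl l" "l > 0" "i < j"
  shows "int l ^ i dvd (x j - 1)" "\<not> int l ^ Suc i dvd (x j - 1)"
  using V_level[OF assms(2,3), of i j] assms by (auto simp: VE_def E_def dvd_eq_mod_eq_0)

lemma QZ_infinite: "l > 1 \<Longrightarrow> infinite (QZ l)"
proof
  assume l: "l > 1" and f: "finite (QZ l)"
  let ?f = "\<lambda>k. qq l (Suc k) 1"
  have "?f k \<in> QZ l" for k
    using qq_QZ[where l=l and j="Suc k" and A=1] one_less_power[of "int l" "Suc k"] l by simp
  then have "range ?f \<subseteq> QZ l" by auto
  moreover have "inj ?f"
  proof (rule injI)
    fix k k' assume "?f k = ?f k'"
    then have "(of_nat l :: rat) ^ Suc k = of_nat l ^ Suc k'" by (simp add: qq_def)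
    then have "l ^ Suc k = l ^ Suc k'" by (metis of_nat_eq_iff of_nat_power)
    then show "k = k'" using l power_inject_exp by blast
  qed
  ultimately show False using f by (meson finite_imageD finite_subset infinite_UNIV_nat)
qed

lemma finite_Agrp: "l > 0 \<Longrightarrow> finite (carrier (Agrp l i j))"
  by (simp add: carrier_Agrp)

lemma iso_via_psi: assumes "h \<in> iso (Agrp l i1 i2) K"
  shows "(K \<cong> H) \<longleftrightarrow> (Agrp l i1 i2 \<cong> H)"
proof -
  have a: "Agrp l i1 i2 \<cong> K" using assms by (auto simp: is_iso_def)
  have b: "K \<cong> Agrp l i1 i2" using group.iso_sym[OF group_Agrp a] .
  show ?thesis using a b iso_trans by metis
qed

lemma split_kernel: assumes l: "prime l" and x: "x \<in> Zl l" and y: "y \<in> Zl l"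
  shows "(ker_group l (x, zzero, zzero, y) \<cong> Agrp l a (a + b)) \<longleftrightarrow>
     ((V l a x \<and> V l (a + b) y) \<or> (V l (a + b) x \<and> V l a y))"
proof -
  have l0: "l > 0" and l1: "l > 1" using prime_gt_0_nat[OF l] prime_gt_1_nat[OF l] by auto
  let ?M = "(x, zzero, zzero, y)"
  have mi: "mat_in l ?M" using x y zzero_Zl[OF l0] by (simp add: mat_in_def)
  show ?thesis
  proof (cases "(\<exists>i. V l i x) \<and> (\<exists>i. V l i y)")
    case True
    then obtain i1 i2 where i1: "V l i1 x" and i2: "V l i2 y" by blast
    have C: "carrier (ker_group l ?M) = Dset l i1 \<times> Dset l i2"
    proof (rule ker_char[OF refl mi l0, of i1 "Suc (max i1 i2)" i2])
      fix j U V assume j: "Suc (max i1 i2) \<le> j"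
      have "((x j - 1) * U) mod int l ^ j = 0 \<longleftrightarrow> int l ^ (j - i1) dvd U"
        using VAL[OF l V_dvd[OF i1 x l0] ] j by simp
      moreover have "((y j - 1) * V) mod int l ^ j = 0 \<longleftrightarrow> int l ^ (j - i2) dvd V"
        using VAL[OF l V_dvd[OF i2 y l0] ] j by simp
      ultimately show "(((x j - 1) * U + zzero j * V) mod int l ^ j = 0 \<and> (zzero j * U + (y j - 1) * V) mod int l ^ j = 0) \<longleftrightarrow>
         (int l ^ (j - i1) dvd U \<and> int l ^ (j - i2) dvd V)"
        by (simp add: zzero_def)
    qed auto
    have "(ker_group l ?M \<cong> Agrp l a (a + b)) \<longleftrightarrow> (Agrp l i1 i2 \<cong> Agrp l a (a + b))"
      by (rule iso_via_psi[OF psi_iso[OF l0 C]])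
    also have "\<dots> \<longleftrightarrow> (i1 = a \<and> i2 = a + b) \<or> (i1 = a + b \<and> i2 = a)" by (rule Agrp_iso_iff[OF l1])
    also have "\<dots> \<longleftrightarrow> ((V l a x \<and> V l (a + b) y) \<or> (V l (a + b) x \<and> V l a y))"
      using V_unique[OF i1 _ x l0] V_unique[OF i2 _ y l0] i1 i2 by blast
    finally show ?thesis .
  next
    case False
    have inf: "infinite (carrier (ker_group l ?M))"
    proof (cases "\<exists>i. V l i x")
      case True
      then have ny: "\<not> (\<exists>i. V l i y)" using False by blast
      have "(\<lambda>v. (0::rat, v)) ` QZ l \<subseteq> carrier (ker_group l ?M)"
      proof
        fix p assume "p \<in> (\<lambda>v. (0::rat, v)) ` QZ l"
        then obtain v where v: "v \<in> QZ l" "p = (0, v)" by auto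
        have z: "(0::rat) \<in> QZ l" by (simp add: QZ_def)
        obtain j U V where r: "0 \<le> U" "U < int l ^ j" "0 \<le> V" "V < int l ^ j" "(0, v) = (qq l j U, qq l j V)"
          using one_level[of "(0, v)" l] v z l0 by auto
        have U0: "U = 0" using r(5) l0 by (simp add: qq_def)
        have "E l j (y j)" using no_V_all[OF ny] .
        then have "(y j * V) mod int l ^ j = V"
          using r(3,4) by (rule E_mul)
        then have "mact l ?M (0, v) = (0, v)"
          using r(5)[symmetric] mact_level[OF mi l0 refl, of j U V] U0 by (simp add: zzero_def qq_def)
        then show "p \<in> carrier (ker_group l ?M)" using v z by (simp add: ker_group_def)
      qed
      moreover have "infinite ((\<lambda>v. (0::rat, v)) ` QZ l)"
        using QZ_infinite[OF l1] by (simp add: finite_image_iff inj_on_def)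
      ultimately show ?thesis using finite_subset by blast
    next
      case nx: False
      have "(\<lambda>u. (u, 0::rat)) ` QZ l \<subseteq> carrier (ker_group l ?M)"
      proof
        fix p assume "p \<in> (\<lambda>u. (u, 0::rat)) ` QZ l"
        then obtain u where u: "u \<in> QZ l" "p = (u, 0)" by auto
        have z: "(0::rat) \<in> QZ l" by (simp add: QZ_def)
        obtain j U V where r: "0 \<le> U" "U < int l ^ j" "0 \<le> V" "V < int l ^ j" "(u, 0) = (qq l j U, qq l j V)"
          using one_level[of "(u, 0)" l] u z l0 by auto
        have V0: "V = 0" using r(5) l0 by (simp add: qq_def)
        have "E l j (x j)" using no_V_all[OF nx] .
        then have "(x j * U) mod int l ^ j = U"
          using r(1,2) by (rule E_mul)
        then have "mact l ?M (u, 0) = (u, 0)"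
          using r(5)[symmetric] mact_level[OF mi l0 refl, of j U V] V0 by (simp add: zzero_def qq_def)
        then show "p \<in> carrier (ker_group l ?M)" using u z by (simp add: ker_group_def)
      qed
      moreover have "infinite ((\<lambda>u. (u, 0::rat)) ` QZ l)"
        using QZ_infinite[OF l1] by (simp add: finite_image_iff inj_on_def)
      ultimately show ?thesis using finite_subset by blast
    qed
    have "\<not> (ker_group l ?M \<cong> Agrp l a (a + b))"
      using iso_finite inf finite_Agrp[OF l0] by blast
    moreover have "\<not> ((V l a x \<and> V l (a + b) y) \<or> (V l (a + b) x \<and> V l a y))" using False by blast
    ultimately show ?thesis by blast
  qed
qed



definition irr :: "nat \<Rightarrow> int \<Rightarrow> int \<Rightarrow> bool" where
  "irr l T N \<longleftrightarrow> (\<forall>z::int. (z^2 - T * z + N) mod int l \<noteq> 0)"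

lemma IRR: assumes l: "prime l" and ir: "irr l T N" and nd: "\<not> (int l dvd X \<and> int l dvd Y)"
  shows "\<not> int l dvd (X^2 + T * X * Y + N * Y^2)"
proof
  have pl: "prime (int l)" using l by simp
  assume D: "int l dvd (X^2 + T * X * Y + N * Y^2)"
  show False
  proof (cases "int l dvd Y")
    case True
    then have "int l dvd T * X * Y + N * Y^2" by (simp add: power2_eq_square)
    then have "int l dvd X^2" using D by (metis add_diff_cancel_right' add.assoc dvd_diff)
    then have "int l dvd X" using pl prime_dvd_power by blast
    then show False using nd True by blast
  next
    case False
    have cp: "coprime Y (int l)" using coprime_pow_l[OF l False, of 1] by simp
    obtain Y' where Y': "(Y * Y') mod int l = 1 mod int l" using inv_mod_exists[OF cp] l prime_gt_0_nat by force
    have d1: "int l dvd Y * Y' - 1" using Y' by (simp add: mod_eq_dvd_iff)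
    define z where "z = - X * Y'"
    have eq: "Y^2 * (z^2 - T * z + N) - (X^2 + T * X * Y + N * Y^2) = (Y * Y' - 1) * (X^2 * (Y * Y' + 1) + T * X * Y)"
      by (simp add: z_def power2_eq_square algebra_simps)
    have "int l dvd Y^2 * (z^2 - T * z + N) - (X^2 + T * X * Y + N * Y^2)" unfolding eq using d1 by simp
    then have "int l dvd Y^2 * (z^2 - T * z + N)" using D by (metis diff_add_cancel dvd_add)
    moreover have "\<not> int l dvd Y^2" using pl False prime_dvd_power by blast
    ultimately have "int l dvd (z^2 - T * z + N)" using pl prime_dvd_mult_iff by blast
    then show False using ir by (simp add: irr_def dvd_eq_mod_eq_0)
  qed
qed

lemma irr_cong: assumes "T mod int l = T' mod int l" "N mod int l = N' mod int l" "irr l T N" shows "irr l T' N'"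
proof -
  have "(z^2 - T' * z + N') mod int l = (z^2 - T * z + N) mod int l" for z
    using assms(1,2) by (metis mod_add_cong mod_diff_cong mod_mult_cong)
  then show ?thesis using assms(3) by (simp add: irr_def)
qed

lemma NS_lin: assumes l: "prime l" and nd: "\<not> int l dvd (X^2 + T * X * Y + N * Y^2)"
  shows "(int l ^ k dvd X * U - N * Y * W \<and> int l ^ k dvd Y * U + (X + T * Y) * W) \<longleftrightarrow>
         (int l ^ k dvd U \<and> int l ^ k dvd W)"
proof
  assume "int l ^ k dvd U \<and> int l ^ k dvd W"
  then show "int l ^ k dvd X * U - N * Y * W \<and> int l ^ k dvd Y * U + (X + T * Y) * W" by simp
next
  assume A: "int l ^ k dvd X * U - N * Y * W \<and> int l ^ k dvd Y * U + (X + T * Y) * W"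
  define D where "D = X^2 + T * X * Y + N * Y^2"
  have e1: "(X + T * Y) * (X * U - N * Y * W) + N * Y * (Y * U + (X + T * Y) * W) = D * U"
    by (simp add: D_def power2_eq_square algebra_simps)
  have e2: "- Y * (X * U - N * Y * W) + X * (Y * U + (X + T * Y) * W) = D * W"
    by (simp add: D_def power2_eq_square algebra_simps)
  have "int l ^ k dvd D * U" unfolding e1[symmetric] using A by simp
  moreover have "int l ^ k dvd D * W" unfolding e2[symmetric] using A by simp
  moreover have "coprime (int l ^ k) D" using coprime_pow_l[OF l nd[folded D_def], of k] by (simp add: coprime_commute)
  ultimately show "int l ^ k dvd U \<and> int l ^ k dvd W" by (simp add: coprime_dvd_mult_right_iff)
qed

definition nsm :: "nat \<Rightarrow> zl \<Rightarrow> zl \<Rightarrow> zl \<Rightarrow> zl \<Rightarrow> zmat" where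
  "nsm l t nn x y = (x, zneg l (zmul l nn y), y, zadd l x (zmul l t y))"

lemma nsm_in: "l > 0 \<Longrightarrow> t \<in> Zl l \<Longrightarrow> nn \<in> Zl l \<Longrightarrow> x \<in> Zl l \<Longrightarrow> y \<in> Zl l \<Longrightarrow> mat_in l (nsm l t nn x y)"
  by (simp add: nsm_def mat_in_def zneg_Zl zmul_Zl zadd_Zl)

lemma ns_c1: "((X - 1) * U + ((- ((N * Y) mod m)) mod m) * W) mod m = ((X - 1) * U - N * Y * W) mod (m::int)"
proof -
  have "((X - 1) * U + ((- ((N * Y) mod m)) mod m) * W) mod m = ((X - 1) * U + (- ((N * Y) mod m)) * W) mod m"
    by (rule mmi4)
  also have "\<dots> = ((X - 1) * U - ((N * Y) mod m) * W) mod m" by simp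
  also have "\<dots> = ((X - 1) * U - (N * Y) * W) mod m" by (rule mmi8)
  finally show ?thesis by simp
qed

lemma ns_c2: "(Y * U + ((X + (T * Y) mod m) mod m - 1) * W) mod m = (Y * U + (X + T * Y - 1) * W) mod (m::int)"
proof -
  have "((X + (T * Y) mod m) mod m - 1) mod m = (X + T * Y - 1) mod m" by (simp add: mod_simps)
  then have "(((X + (T * Y) mod m) mod m - 1) * W) mod m = ((X + T * Y - 1) * W) mod m"
    by (metis mod_mult_left_eq)
  then show ?thesis by (metis mod_add_cong mod_mod_trivial)
qed

definition EE :: "nat \<Rightarrow> nat \<Rightarrow> int \<Rightarrow> int \<Rightarrow> bool" where
  "EE l k X Y \<longleftrightarrow> E l k X \<and> Y mod int l ^ k = 0"
definition VV :: "nat \<Rightarrow> nat \<Rightarrow> zl \<Rightarrow> zl \<Rightarrow> bool" where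
  "VV l i x y \<longleftrightarrow> EE l i (x i) (y i) \<and> \<not> EE l (Suc i) (x (Suc i)) (y (Suc i))"
definition VVE :: "nat \<Rightarrow> nat \<Rightarrow> int \<Rightarrow> int \<Rightarrow> bool" where
  "VVE l i X Y \<longleftrightarrow> EE l i X Y \<and> \<not> EE l (Suc i) X Y"

lemma EE_level: assumes "x \<in> Zl l" "y \<in> Zl l" "l > 0" "k \<le> j" shows "EE l k (x k) (y k) \<longleftrightarrow> EE l k (x j) (y j)"
  using E_level[OF assms(1,3,4)] Zl_mod[OF assms(2,4,3)] Zl_range[OF assms(2), of k] by (simp add: EE_def)

lemma VV_level: assumes "x \<in> Zl l" "y \<in> Zl l" "l > 0" "Suc i \<le> j" shows "VV l i x y \<longleftrightarrow> VVE l i (x j) (y j)"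
  using EE_level[OF assms(1-3), of i j] EE_level[OF assms(1-3), of "Suc i" j] assms(4)
  by (simp add: VV_def VVE_def)

lemma EE_mono: "EE l k X Y \<Longrightarrow> k' \<le> k \<Longrightarrow> EE l k' X Y"
  unfolding EE_def using E_mono by (metis dvd_eq_mod_eq_0 dvd_trans le_imp_power_dvd)

lemma VV_unique: assumes "VV l i x y" "VV l i' x y" "x \<in> Zl l" "y \<in> Zl l" "l > 0" shows "i = i'"
proof -
  let ?j = "Suc (max i i')"
  have "VVE l i (x ?j) (y ?j)" using VV_level[OF assms(3-5), of i ?j] assms(1) by simp
  moreover have "VVE l i' (x ?j) (y ?j)" using VV_level[OF assms(3-5), of i' ?j] assms(2) by simp
  ultimately show "i = i'" unfolding VVE_def by (metis EE_mono not_less_eq_eq nle_le)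
qed

lemma no_VV_all: assumes "\<not> (\<exists>i. VV l i x y)" shows "EE l k (x k) (y k)"
proof (induction k)
  case 0 then show ?case by (simp add: EE_def)
next
  case (Suc k) then show ?case using assms by (auto simp: VV_def)
qed

lemma nonsplit_kernel: assumes l: "prime l" and t: "t \<in> Zl l" and nn: "nn \<in> Zl l"
  and x: "x \<in> Zl l" and y: "y \<in> Zl l" and ir: "irr l (t 1) (nn 1)"
  shows "(ker_group l (nsm l t nn x y) \<cong> Agrp l a (a + b)) \<longleftrightarrow> VV l a x y \<and> b = 0"
proof -
  have l0: "l > 0" and l1: "l > 1" using prime_gt_0_nat[OF l] prime_gt_1_nat[OF l] by auto
  let ?M = "nsm l t nn x y"
  have mi: "mat_in l ?M" using nsm_in[OF l0 t nn x y] .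
  have Mdef: "?M = (x, zneg l (zmul l nn y), y, zadd l x (zmul l t y))" by (simp add: nsm_def)
  show ?thesis
  proof (cases "\<exists>i. VV l i x y")
    case True
    then obtain i where i: "VV l i x y" by blast
    have C: "carrier (ker_group l ?M) = Dset l i \<times> Dset l i"
    proof (rule ker_char[OF Mdef mi l0, of i "Suc i" i])
      fix j U W assume j: "Suc i \<le> j"
      have vv: "VVE l i (x j) (y j)" using VV_level[OF x y l0 j] i by simp
      have d1: "int l ^ i dvd x j - 1" "int l ^ i dvd y j" using vv by (auto simp: VVE_def EE_def E_def dvd_eq_mod_eq_0)
      then obtain X' Y' where X': "x j - 1 = int l ^ i * X'" and Y': "y j = int l ^ i * Y'" by (auto elim!: dvdE)
      have nd: "\<not> (int l dvd X' \<and> int l dvd Y')"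
      proof
        assume "int l dvd X' \<and> int l dvd Y'"
        then have "int l ^ Suc i dvd x j - 1" "int l ^ Suc i dvd y j" using X' Y' by (auto simp: mult_dvd_mono)
        then show False using vv by (simp add: VVE_def EE_def E_def dvd_eq_mod_eq_0)
      qed
      have irj: "irr l (t j) (nn j)"
      proof (rule irr_cong[OF _ _ ir])
        show "t 1 mod int l = t j mod int l" using Zl_mod[OF t, of 1 j] Zl_mod[OF t, of 1 1] j l0 by simp
        show "nn 1 mod int l = nn j mod int l" using Zl_mod[OF nn, of 1 j] Zl_mod[OF nn, of 1 1] j l0 by simp
      qed
      have ndD: "\<not> int l dvd (X'^2 + t j * X' * Y' + nn j * Y'^2)" by (rule IRR[OF l irj nd])
      have pj: "int l ^ j = int l ^ i * int l ^ (j - i)" using j by (simp add: power_add[symmetric])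
      have li0: "int l ^ i \<noteq> 0" using l0 by simp
      have "(((x j - 1) * U + zneg l (zmul l nn y) j * W) mod int l ^ j = 0) \<longleftrightarrow>
            int l ^ i * int l ^ (j - i) dvd int l ^ i * (X' * U - nn j * Y' * W)"
        unfolding zneg_def zmul_def ns_c1 by (simp add: X' Y' pj dvd_eq_mod_eq_0[symmetric] algebra_simps)
      also have "\<dots> \<longleftrightarrow> int l ^ (j - i) dvd X' * U - nn j * Y' * W" using li0 l0 by simp
      finally have c1: "(((x j - 1) * U + zneg l (zmul l nn y) j * W) mod int l ^ j = 0) \<longleftrightarrow> int l ^ (j - i) dvd X' * U - nn j * Y' * W" .
      have "((y j * U + (zadd l x (zmul l t y) j - 1) * W) mod int l ^ j = 0) \<longleftrightarrow>
            int l ^ i * int l ^ (j - i) dvd int l ^ i * (Y' * U + (X' + t j * Y') * W)"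
      proof -
        have xj: "x j = int l ^ i * X' + 1" using X' by simp
        have "y j * U + (x j + t j * y j - 1) * W = int l ^ i * (Y' * U + (X' + t j * Y') * W)"
          by (simp add: xj Y' algebra_simps)
        then show ?thesis unfolding zadd_def zmul_def ns_c2 by (simp add: pj dvd_eq_mod_eq_0[symmetric])
      qed
      also have "\<dots> \<longleftrightarrow> int l ^ (j - i) dvd Y' * U + (X' + t j * Y') * W" using li0 l0 by simp
      finally have c2: "((y j * U + (zadd l x (zmul l t y) j - 1) * W) mod int l ^ j = 0) \<longleftrightarrow> int l ^ (j - i) dvd Y' * U + (X' + t j * Y') * W" .
      show "((((x j - 1) * U + zneg l (zmul l nn y) j * W) mod int l ^ j = 0) \<and> ((y j * U + (zadd l x (zmul l t y) j - 1) * W) mod int l ^ j = 0))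
         \<longleftrightarrow> (int l ^ (j - i) dvd U \<and> int l ^ (j - i) dvd W)"
        unfolding c1 c2 by (rule NS_lin[OF l ndD])
    qed auto
    have "(ker_group l ?M \<cong> Agrp l a (a + b)) \<longleftrightarrow> (Agrp l i i \<cong> Agrp l a (a + b))"
      by (rule iso_via_psi[OF psi_iso[OF l0 C]])
    also have "\<dots> \<longleftrightarrow> (i = a \<and> i = a + b) \<or> (i = a + b \<and> i = a)" by (rule Agrp_iso_iff[OF l1])
    also have "\<dots> \<longleftrightarrow> i = a \<and> b = 0" by linarith
    also have "\<dots> \<longleftrightarrow> VV l a x y \<and> b = 0"
    proof -
      have "VV l a x y \<longleftrightarrow> i = a" using VV_unique[OF i _ x y l0, of a] i by blast
      then show ?thesis by blast
    qed
    finally show ?thesis .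
  next
    case False
    have inf: "infinite (carrier (ker_group l ?M))"
    proof -
      have "(\<lambda>u. (u, 0::rat)) ` QZ l \<subseteq> carrier (ker_group l ?M)"
      proof
        fix p assume "p \<in> (\<lambda>u. (u, 0::rat)) ` QZ l"
        then obtain u where u: "u \<in> QZ l" "p = (u, 0)" by auto
        have z: "(0::rat) \<in> QZ l" by (simp add: QZ_def)
        obtain j U V where r: "0 \<le> U" "U < int l ^ j" "0 \<le> V" "V < int l ^ j" "(u, 0) = (qq l j U, qq l j V)"
          using one_level[of "(u, 0)" l] u z l0 by auto
        have V0: "V = 0" using r(5) l0 by (simp add: qq_def)
        have ee: "EE l j (x j) (y j)" using no_VV_all[OF False] .
        then have "(x j * U) mod int l ^ j = U" using r(1,2) by (simp add: EE_def E_mul)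
        moreover have "y j = 0" using ee Zl_range[OF y, of j] by (simp add: EE_def)
        ultimately have "mact l ?M (u, 0) = (u, 0)"
          using r(5)[symmetric] mact_level[OF mi l0 Mdef, of j U V] V0 by (simp add: qq_def)
        then show "p \<in> carrier (ker_group l ?M)" using u z by (simp add: ker_group_def)
      qed
      moreover have "infinite ((\<lambda>u. (u, 0::rat)) ` QZ l)"
        using QZ_infinite[OF l1] by (simp add: finite_image_iff inj_on_def)
      ultimately show ?thesis using finite_subset by blast
    qed
    have "\<not> (ker_group l ?M \<cong> Agrp l a (a + b))"
      using iso_finite inf finite_Agrp[OF l0] by blast
    then show ?thesis using False by blast
  qed
qed



lemma count_mod: assumes l0: "l > 0" and kn: "k \<le> n" and S: "S \<subseteq> {0..<int l ^ k}"
  shows "card {X \<in> {0..<int l ^ n}. X mod int l ^ k \<in> S} = card S * l ^ (n - k)"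
proof -
  let ?A = "{X \<in> {0..<int l ^ n}. X mod int l ^ k \<in> S}"
  let ?B = "S \<times> {0..<int l ^ (n - k)}"
  have pk: "int l ^ k > 0" using l0 by simp
  have pn: "int l ^ n = int l ^ k * int l ^ (n - k)" using kn by (simp add: power_add[symmetric])
  have "bij_betw (\<lambda>X. (X mod int l ^ k, X div int l ^ k)) ?A ?B"
  proof (rule bij_betw_byWitness[where f' = "\<lambda>(r, q). r + int l ^ k * q"])
    show "\<forall>X\<in>?A. (\<lambda>(r, q). r + int l ^ k * q) (X mod int l ^ k, X div int l ^ k) = X"
      by (simp add: add.commute)
    show "\<forall>p\<in>?B. (\<lambda>X. (X mod int l ^ k, X div int l ^ k)) ((\<lambda>(r, q). r + int l ^ k * q) p) = p"
    proof
      fix p assume "p \<in> ?B"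
      then obtain r q where p: "p = (r, q)" "r \<in> S" "0 \<le> q" by auto
      have r: "0 \<le> r" "r < int l ^ k" using S p(2) by auto
      have "(r + int l ^ k * q) mod int l ^ k = r" using r by simp
      moreover have "(r + int l ^ k * q) div int l ^ k = q" using r pk by simp
      ultimately show "(\<lambda>X. (X mod int l ^ k, X div int l ^ k)) ((\<lambda>(r, q). r + int l ^ k * q) p) = p"
        using p by simp
    qed
    show "(\<lambda>X. (X mod int l ^ k, X div int l ^ k)) ` ?A \<subseteq> ?B"
    proof
      fix p assume "p \<in> (\<lambda>X. (X mod int l ^ k, X div int l ^ k)) ` ?A"
      then obtain X where X: "p = (X mod int l ^ k, X div int l ^ k)" "0 \<le> X" "X < int l ^ n" "X mod int l ^ k \<in> S" by auto
      have "X div int l ^ k < int l ^ (n - k)"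
      proof (rule ccontr)
        assume "\<not> X div int l ^ k < int l ^ (n - k)"
        then have "int l ^ k * int l ^ (n - k) \<le> int l ^ k * (X div int l ^ k)" using pk by simp
        also have "\<dots> \<le> X" using pk by (metis le_add_same_cancel1 mult_div_mod_eq pos_mod_sign)
        finally show False using X(3) pn by simp
      qed
      then show "p \<in> ?B" using X pk by (simp add: pos_imp_zdiv_nonneg_iff)
    qed
    show "(\<lambda>(r, q). r + int l ^ k * q) ` ?B \<subseteq> ?A"
    proof
      fix X assume "X \<in> (\<lambda>(r, q). r + int l ^ k * q) ` ?B"
      then obtain r q where X: "X = r + int l ^ k * q" "r \<in> S" "0 \<le> q" "q < int l ^ (n - k)" by auto
      have r: "0 \<le> r" "r < int l ^ k" using S X(2) by auto
      have "q + 1 \<le> int l ^ (n - k)" using X(4) by simp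
      then have "int l ^ k * (q + 1) \<le> int l ^ k * int l ^ (n - k)" using pk by simp
      then have "X < int l ^ n" using X(1) r pn by (simp add: algebra_simps)
      moreover have "0 \<le> X" using X r pk by simp
      moreover have "X mod int l ^ k = r" using X(1) r by simp
      ultimately show "X \<in> ?A" using X(2) by simp
    qed
  qed
  then have "card ?A = card ?B" by (rule bij_betw_same_card)
  also have "\<dots> = card S * l ^ (n - k)"
    by (simp add: card_cartesian_product nat_power_eq)
  finally show ?thesis .
qed

lemma count_mod1: assumes l0: "l > 0" and kn: "k \<le> n" and S: "S \<subseteq> {0..<int l ^ k}"
  and P: "\<And>X. P X \<longleftrightarrow> X mod int l ^ k \<in> S"
  shows "card {X \<in> {0..<int l ^ n}. P X} = card S * l ^ (n - k)"
  using count_mod[OF assms(1-3)] P by simp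

lemma card_Un: assumes l: "prime l" "n \<ge> 1"
  shows "card {X \<in> {0..<int l ^ n}. \<not> int l dvd X} = (l - 1) * l ^ (n - 1)"
proof -
  have l1: "l > 1" using prime_gt_1_nat[OF l(1)] .
  have "card {X \<in> {0..<int l ^ n}. \<not> int l dvd X} = card {1..<int l} * l ^ (n - 1)"
  proof (rule count_mod1)
    show "\<not> int l dvd X \<longleftrightarrow> X mod int l ^ 1 \<in> {1..<int l}" for X
    proof -
      have "0 \<le> X mod int l" "X mod int l < int l" using l1 by auto
      then show ?thesis by (auto simp: dvd_eq_mod_eq_0)
    qed
  qed (use l1 l(2) in auto)
  moreover have "nat (int l - 1) = l - 1" by arith
  ultimately show ?thesis by simp
qed

lemma card_T0: assumes l: "prime l" "n \<ge> 1"
  shows "card {X \<in> {0..<int l ^ n}. \<not> int l dvd X \<and> VE l 0 X} = (l - 2) * l ^ (n - 1)"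
proof -
  have l1: "l > 1" using prime_gt_1_nat[OF l(1)] .
  have iff: "(\<not> int l dvd X \<and> VE l 0 X) \<longleftrightarrow> X mod int l ^ 1 \<in> {2..<int l}" for X
  proof -
    have "VE l 0 X \<longleftrightarrow> X mod int l \<noteq> 1"
      using l1 by (simp add: VE_def E_def mod_eq_dvd_iff[symmetric] dvd_eq_mod_eq_0[symmetric])
    moreover have "0 \<le> X mod int l" "X mod int l < int l" using l1 by auto
    ultimately show ?thesis by (auto simp: dvd_eq_mod_eq_0)
  qed
  have "card {X \<in> {0..<int l ^ n}. \<not> int l dvd X \<and> VE l 0 X} = card {2..<int l} * l ^ (n - 1)"
    by (rule count_mod1[OF _ _ _ iff]) (use l1 l(2) in auto)
  moreover have "nat (int l - 2) = l - 2" by arith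
  ultimately show ?thesis by simp
qed

lemma E_iff_mod: "k \<ge> 1 \<Longrightarrow> l > 1 \<Longrightarrow> E l k X \<longleftrightarrow> X mod int l ^ k \<in> {1}"
proof -
  assume a: "k \<ge> 1" "l > 1"
  then have "int l ^ k > 1" by (simp add: one_less_power)
  then have "1 mod int l ^ k = 1" by simp
  then show ?thesis by (simp add: E_def mod_eq_dvd_iff[symmetric] dvd_eq_mod_eq_0[symmetric])
qed

lemma card_Ak: assumes l: "l > 1" and k: "1 \<le> k" "k \<le> n"
  shows "card {X \<in> {0..<int l ^ n}. E l k X} = l ^ (n - k)"
proof -
  have "card {X \<in> {0..<int l ^ n}. E l k X} = card {1::int} * l ^ (n - k)"
    by (rule count_mod1[OF _ k(2) _ E_iff_mod[OF k(1) l]]) (use l k in \<open>auto simp: one_less_power\<close>)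
  then show ?thesis by simp
qed

lemma E_not_dvd: "E l k X \<Longrightarrow> k \<ge> 1 \<Longrightarrow> l > 1 \<Longrightarrow> \<not> int l dvd X"
proof -
  assume a: "E l k X" "k \<ge> 1" "l > 1"
  then have "E l 1 X" using E_mono by blast
  then have "X mod int l = 1" using E_iff_mod[of 1 l X] a by simp
  then show ?thesis using a by (auto simp: dvd_eq_mod_eq_0)
qed

lemma card_Ti: assumes l: "l > 1" and i: "1 \<le> i" "Suc i \<le> n"
  shows "real (card {X \<in> {0..<int l ^ n}. \<not> int l dvd X \<and> VE l i X}) = real l ^ (n - i) - real l ^ (n - Suc i)"
proof -
  let ?A = "\<lambda>k. {X \<in> {0..<int l ^ n}. E l k X}"
  have eq: "{X \<in> {0..<int l ^ n}. \<not> int l dvd X \<and> VE l i X} = ?A i - ?A (Suc i)"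
    using E_not_dvd[OF _ i(1) l] by (auto simp: VE_def)
  have sub: "?A (Suc i) \<subseteq> ?A i" using E_mono[of l "Suc i" _ i] by auto
  have fin: "finite (?A (Suc i))" by (rule finite_subset[of _ "{0..<int l ^ n}"]) auto
  have "card (?A i - ?A (Suc i)) = card (?A i) - card (?A (Suc i))"
    by (rule card_Diff_subset[OF fin sub])
  moreover have "card (?A (Suc i)) \<le> card (?A i)"
    by (rule card_mono[OF _ sub]) (rule finite_subset[of _ "{0..<int l ^ n}"], auto)
  ultimately have "real (card (?A i - ?A (Suc i))) = real (card (?A i)) - real (card (?A (Suc i)))"
    by (simp add: of_nat_diff)
  then show ?thesis unfolding eq using card_Ak[OF l i(1)] card_Ak[OF l _ i(2)] i by simp
qed



definition UnS :: "nat \<Rightarrow> nat \<Rightarrow> int set" where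
  "UnS l n = {X \<in> {0..<int l ^ n}. \<not> int l dvd X}"

definition dg :: "int \<times> int \<Rightarrow> int \<times> int \<times> int \<times> int" where
  "dg p = (fst p, 0, 0, snd p)"

lemma zemb_at: "0 \<le> X \<Longrightarrow> X < int l ^ n \<Longrightarrow> zemb l X n = X"
  by (simp add: zemb_def)

lemma zunit_zemb: assumes "prime l" "\<not> int l dvd X" shows "zunit l (zemb l X)"
proof -
  have l0: "l > 0" using prime_gt_0_nat[OF assms(1)] .
  have "\<not> int l dvd X mod int l" using assms(2) by (simp add: dvd_eq_mod_eq_0)
  then show ?thesis using zunit_iff[OF assms(1)] zemb_Zl[OF l0] by (simp add: zemb_def)
qed

lemma unit_level: assumes "prime l" "zunit l x" "n \<ge> 1" shows "x n \<in> UnS l n"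
proof -
  have l0: "l > 0" using prime_gt_0_nat[OF assms(1)] .
  have x: "x \<in> Zl l" "\<not> int l dvd x 1" using assms zunit_iff by auto
  have "x n mod int l = x 1" using Zl_mod[OF x(1) assms(3) l0] by simp
  then have "\<not> int l dvd x n" using x(2) by (metis dvd_eq_mod_eq_0 mod_mod_trivial)
  then show ?thesis using Zl_range[OF x(1), of n] by (simp add: UnS_def)
qed

lemma split_red_img: assumes l: "prime l" and n: "n \<ge> 1"
  and PQ: "\<And>x y. x \<in> Zl l \<Longrightarrow> y \<in> Zl l \<Longrightarrow> Pr (x, zzero, zzero, y) \<longleftrightarrow> Q (x n) (y n)"
  shows "red l n ` {M \<in> split_std l. Pr M} = dg ` {p \<in> UnS l n \<times> UnS l n. Q (fst p) (snd p)}"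
proof
  have l0: "l > 0" using prime_gt_0_nat[OF l] .
  show "red l n ` {M \<in> split_std l. Pr M} \<subseteq> dg ` {p \<in> UnS l n \<times> UnS l n. Q (fst p) (snd p)}"
  proof
    fix Z assume "Z \<in> red l n ` {M \<in> split_std l. Pr M}"
    then obtain x y where xy: "zunit l x" "zunit l y" "Pr (x, zzero, zzero, y)" "Z = red l n (x, zzero, zzero, y)"
      by (auto simp: split_std_def)
    have Zl: "x \<in> Zl l" "y \<in> Zl l" using xy zunit_def by auto
    have "Z = dg (x n, y n)" using xy(4) by (simp add: red_def dg_def zzero_def)
    moreover have "(x n, y n) \<in> {p \<in> UnS l n \<times> UnS l n. Q (fst p) (snd p)}"
      using unit_level[OF l xy(1) n] unit_level[OF l xy(2) n] PQ[OF Zl] xy(3) by simp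
    ultimately show "Z \<in> dg ` {p \<in> UnS l n \<times> UnS l n. Q (fst p) (snd p)}" by blast
  qed
  show "dg ` {p \<in> UnS l n \<times> UnS l n. Q (fst p) (snd p)} \<subseteq> red l n ` {M \<in> split_std l. Pr M}"
  proof
    fix Z assume "Z \<in> dg ` {p \<in> UnS l n \<times> UnS l n. Q (fst p) (snd p)}"
    then obtain X Y where XY: "X \<in> UnS l n" "Y \<in> UnS l n" "Q X Y" "Z = dg (X, Y)" by auto
    let ?x = "zemb l X" and ?y = "zemb l Y"
    have r: "0 \<le> X" "X < int l ^ n" "0 \<le> Y" "Y < int l ^ n" "\<not> int l dvd X" "\<not> int l dvd Y"
      using XY by (auto simp: UnS_def)
    have u: "zunit l ?x" "zunit l ?y" using zunit_zemb[OF l] r by auto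
    have ev: "?x n = X" "?y n = Y" using zemb_at r by auto
    have "Pr (?x, zzero, zzero, ?y)" using PQ[OF zemb_Zl[OF l0] zemb_Zl[OF l0]] ev XY(3) by simp
    moreover have "Z = red l n (?x, zzero, zzero, ?y)" using XY(4) ev by (simp add: red_def dg_def zzero_def)
    moreover have "(?x, zzero, zzero, ?y) \<in> split_std l" using u by (auto simp: split_std_def)
    ultimately show "Z \<in> red l n ` {M \<in> split_std l. Pr M}" by blast
  qed
qed

lemma card_dg: "card (dg ` A) = card A"
  by (rule card_image) (auto simp: inj_on_def dg_def prod_eq_iff)

definition Tset :: "nat \<Rightarrow> nat \<Rightarrow> nat \<Rightarrow> int set" where
  "Tset l n i = {X \<in> {0..<int l ^ n}. \<not> int l dvd X \<and> VE l i X}"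

definition prr :: "nat \<Rightarrow> nat \<Rightarrow> nat \<Rightarrow> real" where
  "prr l n i = real (card (Tset l n i)) / real (card (UnS l n))"

lemma prr_val: assumes l: "prime l" and i: "Suc i \<le> n"
  shows "prr l n i = (if i = 0 then (real l - 2) / (real l - 1) else 1 / real l ^ i)"
proof -
  have l1: "l > 1" using prime_gt_1_nat[OF l] .
  have n: "n \<ge> 1" using i by simp
  have cU: "real (card (UnS l n)) = (real l - 1) * real l ^ (n - 1)"
    using card_Un[OF l n] l1 unfolding UnS_def by (simp add: of_nat_diff)
  have lpos: "real l > 1" using l1 by simp
  show ?thesis
  proof (cases "i = 0")
    case True
    have "real (card (Tset l n 0)) = (real l - 2) * real l ^ (n - 1)"
      using card_T0[OF l n] l1 prime_ge_2_nat[OF l] unfolding Tset_def by (simp add: of_nat_diff)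
    then show ?thesis using True cU lpos by (simp add: prr_def)
  next
    case False
    obtain m where m: "n = i + 1 + m" using i by (metis add.commute add_Suc_right le_Suc_ex plus_1_eq_Suc)
    have "real (card (Tset l n i)) = real l ^ (n - i) - real l ^ (n - Suc i)"
      using card_Ti[OF l1 _ i] False unfolding Tset_def by simp
    also have "\<dots> = (real l - 1) * real l ^ m" using m by (simp add: algebra_simps)
    finally have cT: "real (card (Tset l n i)) = (real l - 1) * real l ^ m" .
    have "n - 1 = i + m" using m by simp
    then have cU': "real (card (UnS l n)) = (real l - 1) * (real l ^ i * real l ^ m)" using cU by (simp add: power_add)
    show ?thesis using False cT cU' lpos by (simp add: prr_def)
  qed
qed

lemma Tset_disj: "a \<noteq> c \<Longrightarrow> Tset l n a \<inter> Tset l n c = {}"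
proof -
  assume ne: "a \<noteq> c"
  have "\<not> (VE l a X \<and> VE l c X)" for X
  proof
    assume h: "VE l a X \<and> VE l c X"
    show False
    proof (cases "a < c")
      case True then show False using h E_mono[of l c X "Suc a"] by (auto simp: VE_def)
    next
      case False then have "c < a" using ne by simp
      then show False using h E_mono[of l a X "Suc c"] by (auto simp: VE_def)
    qed
  qed
  then show ?thesis by (auto simp: Tset_def)
qed

lemma split_ratio: assumes l: "prime l" and n: "a + b + 1 \<le> n"
  shows "real (card {p \<in> UnS l n \<times> UnS l n. (VE l a (fst p) \<and> VE l (a + b) (snd p)) \<or> (VE l (a + b) (fst p) \<and> VE l a (snd p))})
         / real (card (UnS l n \<times> UnS l n)) =
     (if b = 0 then prr l n a ^ 2 else 2 * prr l n a * prr l n (a + b))"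
proof -
  have fin: "finite (Tset l n i)" for i by (rule finite_subset[of _ "{0..<int l ^ n}"]) (auto simp: Tset_def)
  have finU: "finite (UnS l n)" by (rule finite_subset[of _ "{0..<int l ^ n}"]) (auto simp: UnS_def)
  have S: "{p \<in> UnS l n \<times> UnS l n. (VE l a (fst p) \<and> VE l (a + b) (snd p)) \<or> (VE l (a + b) (fst p) \<and> VE l a (snd p))}
     = Tset l n a \<times> Tset l n (a + b) \<union> Tset l n (a + b) \<times> Tset l n a"
    by (auto simp: UnS_def Tset_def)
  have cS: "real (card (Tset l n a \<times> Tset l n (a + b) \<union> Tset l n (a + b) \<times> Tset l n a)) =
     (if b = 0 then real (card (Tset l n a)) ^ 2 else 2 * real (card (Tset l n a)) * real (card (Tset l n (a + b))))"
  proof (cases "b = 0")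
    case True then show ?thesis by (simp add: card_cartesian_product power2_eq_square)
  next
    case False
    have "(Tset l n a \<times> Tset l n (a + b)) \<inter> (Tset l n (a + b) \<times> Tset l n a) = {}"
      using Tset_disj[of a "a + b" l n] False by auto
    then have "card (Tset l n a \<times> Tset l n (a + b) \<union> Tset l n (a + b) \<times> Tset l n a) =
        card (Tset l n a \<times> Tset l n (a + b)) + card (Tset l n (a + b) \<times> Tset l n a)"
      by (intro card_Un_disjoint) (auto intro: fin)
    then show ?thesis using False by (simp add: card_cartesian_product)
  qed
  have cU: "real (card (UnS l n \<times> UnS l n)) = real (card (UnS l n)) ^ 2"
    by (simp add: card_cartesian_product power2_eq_square)
  show ?thesis unfolding S cS cU prr_def by (simp add: power2_eq_square field_simps)
qed



definition GsN :: "nat \<Rightarrow> nat \<Rightarrow> (int \<times> int) set" where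
  "GsN l n = {p \<in> {0..<int l ^ n} \<times> {0..<int l ^ n}. \<not> (int l dvd fst p \<and> int l dvd snd p)}"

definition hn :: "nat \<Rightarrow> zl \<Rightarrow> zl \<Rightarrow> nat \<Rightarrow> int \<times> int \<Rightarrow> int \<times> int \<times> int \<times> int" where
  "hn l t nn n p = (fst p, (- (nn n * snd p)) mod int l ^ n, snd p, (fst p + t n * snd p) mod int l ^ n)"

lemma card_hn: "card (hn l t nn n ` A) = card A"
  by (rule card_image) (auto simp: inj_on_def hn_def prod_eq_iff)

lemma mdet_nsm: assumes l0: "l > 0"
  shows "mdet l (nsm l t nn x y) k mod int l ^ k = (x k ^ 2 + t k * x k * y k + nn k * y k ^ 2) mod int l ^ k"
proof -
  let ?m = "int l ^ k"
  have d: "((x k + (t k * y k) mod ?m) mod ?m) mod ?m = (x k + t k * y k) mod ?m" by (simp add: mod_simps)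
  have b: "((- ((nn k * y k) mod ?m)) mod ?m) mod ?m = (- (nn k * y k)) mod ?m" by (simp add: mod_simps)
  have 1: "(x k * ((x k + (t k * y k) mod ?m) mod ?m)) mod ?m = (x k * (x k + t k * y k)) mod ?m"
    using mod_mult_cong[OF refl d] by simp
  have 2: "(((- ((nn k * y k) mod ?m)) mod ?m) * y k) mod ?m = ((- (nn k * y k)) * y k) mod ?m"
    using mod_mult_cong[OF b refl] by simp
  have "mdet l (nsm l t nn x y) k = ((x k * ((x k + (t k * y k) mod ?m) mod ?m)) mod ?m - (((- ((nn k * y k) mod ?m)) mod ?m) * y k) mod ?m) mod ?m"
    by (simp add: mdet_def nsm_def zsub_def zmul_def zadd_def zneg_def)
  also have "\<dots> = (x k * (x k + t k * y k) - (- (nn k * y k)) * y k) mod ?m" unfolding 1 2 by (simp add: mod_diff_eq)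
  also have "\<dots> = (x k ^ 2 + t k * x k * y k + nn k * y k ^ 2) mod ?m"
    by (simp add: power2_eq_square algebra_simps)
  finally show ?thesis by simp
qed

lemma nsm_GL2: assumes l: "prime l" and t: "t \<in> Zl l" and nn: "nn \<in> Zl l" and x: "x \<in> Zl l" and y: "y \<in> Zl l"
  and ir: "irr l (t 1) (nn 1)"
  shows "nsm l t nn x y \<in> GL2 l \<longleftrightarrow> \<not> (int l dvd x 1 \<and> int l dvd y 1)"
proof -
  have l0: "l > 0" using prime_gt_0_nat[OF l] .
  have mi: "mat_in l (nsm l t nn x y)" by (rule nsm_in[OF l0 t nn x y])
  have dz: "mdet l (nsm l t nn x y) \<in> Zl l"
    using t nn x y l0 by (simp add: nsm_def mdet_def zsub_Zl zmul_Zl zneg_Zl zadd_Zl)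
  have "nsm l t nn x y \<in> GL2 l \<longleftrightarrow> \<not> int l dvd mdet l (nsm l t nn x y) 1"
    using mi dz zunit_iff[OF l] by (simp add: GL2_def)
  also have "\<dots> \<longleftrightarrow> \<not> int l dvd (x 1 ^ 2 + t 1 * x 1 * y 1 + nn 1 * y 1 ^ 2)"
    using mdet_nsm[OF l0, of t nn x y 1] by (simp add: dvd_eq_mod_eq_0)
  also have "\<dots> \<longleftrightarrow> \<not> (int l dvd x 1 \<and> int l dvd y 1)"
  proof
    assume "\<not> int l dvd (x 1 ^ 2 + t 1 * x 1 * y 1 + nn 1 * y 1 ^ 2)"
    then show "\<not> (int l dvd x 1 \<and> int l dvd y 1)" by (auto simp: power2_eq_square)
  next
    assume "\<not> (int l dvd x 1 \<and> int l dvd y 1)"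
    then show "\<not> int l dvd (x 1 ^ 2 + t 1 * x 1 * y 1 + nn 1 * y 1 ^ 2)" by (rule IRR[OF l ir])
  qed
  finally show ?thesis .
qed

lemma dvd_level: assumes "x \<in> Zl l" "l > 0" "n \<ge> 1" shows "int l dvd x n \<longleftrightarrow> int l dvd x 1"
proof -
  have "x n mod int l = x 1" using Zl_mod[OF assms(1,3,2)] by simp
  then show ?thesis by (metis dvd_eq_mod_eq_0 mod_mod_trivial)
qed

lemma ns_red_img: assumes l: "prime l" and n: "n \<ge> 1" and t: "t \<in> Zl l" and nn: "nn \<in> Zl l"
  and ir: "irr l (t 1) (nn 1)"
  and PQ: "\<And>x y. x \<in> Zl l \<Longrightarrow> y \<in> Zl l \<Longrightarrow> Pr (nsm l t nn x y) \<longleftrightarrow> Q (x n) (y n)"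
  shows "red l n ` {M \<in> nonsplit_std l t nn. Pr M} = hn l t nn n ` {p \<in> GsN l n. Q (fst p) (snd p)}"
proof -
  have l0: "l > 0" using prime_gt_0_nat[OF l] .
  have redn: "red l n (nsm l t nn x y) = hn l t nn n (x n, y n)" for x y
    by (simp add: red_def nsm_def hn_def zneg_def zmul_def zadd_def mod_simps)
  have ns: "nonsplit_std l t nn = {nsm l t nn x y | x y. x \<in> Zl l \<and> y \<in> Zl l} \<inter> GL2 l"
    by (simp add: nonsplit_std_def nsm_def)
  show ?thesis
  proof
    show "red l n ` {M \<in> nonsplit_std l t nn. Pr M} \<subseteq> hn l t nn n ` {p \<in> GsN l n. Q (fst p) (snd p)}"
    proof
      fix Z assume "Z \<in> red l n ` {M \<in> nonsplit_std l t nn. Pr M}"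
      then obtain x y where xy: "x \<in> Zl l" "y \<in> Zl l" "nsm l t nn x y \<in> GL2 l" "Pr (nsm l t nn x y)"
        "Z = red l n (nsm l t nn x y)" unfolding ns by blast
      have nd: "\<not> (int l dvd x n \<and> int l dvd y n)"
        using nsm_GL2[OF l t nn xy(1,2) ir] xy(3) dvd_level[OF xy(1) l0 n] dvd_level[OF xy(2) l0 n] by simp
      have "(x n, y n) \<in> {p \<in> GsN l n. Q (fst p) (snd p)}"
        using nd Zl_range[OF xy(1), of n] Zl_range[OF xy(2), of n] PQ[OF xy(1,2)] xy(4) by (simp add: GsN_def)
      then show "Z \<in> hn l t nn n ` {p \<in> GsN l n. Q (fst p) (snd p)}" using xy(5) redn by auto
    qed
    show "hn l t nn n ` {p \<in> GsN l n. Q (fst p) (snd p)} \<subseteq> red l n ` {M \<in> nonsplit_std l t nn. Pr M}"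
    proof
      fix Z assume "Z \<in> hn l t nn n ` {p \<in> GsN l n. Q (fst p) (snd p)}"
      then obtain X Y where XY: "(X, Y) \<in> GsN l n" "Q X Y" "Z = hn l t nn n (X, Y)" by auto
      let ?x = "zemb l X" and ?y = "zemb l Y"
      have r: "0 \<le> X" "X < int l ^ n" "0 \<le> Y" "Y < int l ^ n" "\<not> (int l dvd X \<and> int l dvd Y)"
        using XY by (auto simp: GsN_def)
      have z: "?x \<in> Zl l" "?y \<in> Zl l" using zemb_Zl[OF l0] by auto
      have ev: "?x n = X" "?y n = Y" using zemb_at r by auto
      have "nsm l t nn ?x ?y \<in> GL2 l"
        using nsm_GL2[OF l t nn z ir] dvd_level[OF z(1) l0 n] dvd_level[OF z(2) l0 n] ev r(5) by simp
      moreover have "Pr (nsm l t nn ?x ?y)" using PQ[OF z] ev XY(2) by simp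
      moreover have "Z = red l n (nsm l t nn ?x ?y)" using XY(3) ev redn by simp
      ultimately show "Z \<in> red l n ` {M \<in> nonsplit_std l t nn. Pr M}" unfolding ns using z by blast
    qed
  qed
qed



lemma card_B0: assumes "l > 1" "n \<ge> 1" shows "card {X \<in> {0..<int l ^ n}. int l dvd X} = l ^ (n - 1)"
proof -
  have "card {X \<in> {0..<int l ^ n}. int l dvd X} = card {0::int} * l ^ (n - 1)"
    by (rule count_mod1) (use assms in \<open>auto simp: dvd_eq_mod_eq_0\<close>)
  then show ?thesis by simp
qed

lemma card_Y0: assumes "l > 1" "k \<le> n" shows "card {Y \<in> {0..<int l ^ n}. Y mod int l ^ k = 0} = l ^ (n - k)"
proof -
  have "card {Y \<in> {0..<int l ^ n}. Y mod int l ^ k = 0} = card {0::int} * l ^ (n - k)"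
    by (rule count_mod1) (use assms in auto)
  then show ?thesis by simp
qed

definition EEs :: "nat \<Rightarrow> nat \<Rightarrow> nat \<Rightarrow> (int \<times> int) set" where
  "EEs l n k = {p \<in> {0..<int l ^ n} \<times> {0..<int l ^ n}. EE l k (fst p) (snd p)}"

lemma card_EEs: assumes "l > 1" "1 \<le> k" "k \<le> n" shows "card (EEs l n k) = l ^ (n - k) * l ^ (n - k)"
proof -
  have "EEs l n k = {X \<in> {0..<int l ^ n}. E l k X} \<times> {Y \<in> {0..<int l ^ n}. Y mod int l ^ k = 0}"
    by (auto simp: EEs_def EE_def)
  then show ?thesis using card_Ak[OF assms] card_Y0[OF assms(1,3)] by (simp add: card_cartesian_product)
qed

lemma EEs_sub: assumes "l > 1" "1 \<le> k" shows "EEs l n k \<subseteq> GsN l n"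
  using E_not_dvd[OF _ assms(2,1)] by (auto simp: EEs_def GsN_def EE_def)

lemma EEs_mono: "k' \<le> k \<Longrightarrow> EEs l n k \<subseteq> EEs l n k'"
  using EE_mono by (auto simp: EEs_def)


lemma card_GsN: assumes "l > 1" "n \<ge> 1"
  shows "real (card (GsN l n)) = real l ^ n * real l ^ n - real l ^ (n - 1) * real l ^ (n - 1)"
proof -
  let ?W = "{0..<int l ^ n} \<times> {0..<int l ^ n}"
  let ?B = "{X \<in> {0..<int l ^ n}. int l dvd X}"
  have eq: "GsN l n = ?W - ?B \<times> ?B" by (auto simp: GsN_def)
  have sub: "?B \<times> ?B \<subseteq> ?W" by auto
  have "card (?W - ?B \<times> ?B) = card ?W - card (?B \<times> ?B)"
    by (rule card_Diff_subset[OF _ sub]) (rule finite_subset[OF sub], simp)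
  moreover have "card (?B \<times> ?B) \<le> card ?W" by (rule card_mono[OF _ sub]) simp
  ultimately have "real (card (GsN l n)) = real (card ?W) - real (card (?B \<times> ?B))"
    unfolding eq by (simp add: of_nat_diff)
  then show ?thesis using card_B0[OF assms] by (simp add: card_cartesian_product nat_power_eq)
qed

lemma real_card_diff: "B \<subseteq> A \<Longrightarrow> finite A \<Longrightarrow> real (card (A - B)) = real (card A) - real (card B)"
  by (simp add: card_Diff_subset card_mono finite_subset of_nat_diff)



lemma ns_ratio: assumes l: "prime l" and n: "a + b + 1 \<le> n"
  shows "real (card {p \<in> GsN l n. VVE l a (fst p) (snd p) \<and> b = 0}) / real (card (GsN l n)) =
     (if a = 0 \<and> b = 0 then (real l ^ 2 - 2) / (real l ^ 2 - 1)
      else if a > 0 \<and> b = 0 then 1 / real l ^ (2 * a) else 0)"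
proof -
  have l1: "l > 1" using prime_gt_1_nat[OF l] .
  define q where "q = real l"
  have q: "q > 1" using l1 by (simp add: q_def)
  have q2: "q ^ 2 - 1 > 0" using q by (simp add: one_less_power)
  have finG: "finite (GsN l n)" by (rule finite_subset[of _ "{0..<int l ^ n} \<times> {0..<int l ^ n}"]) (auto simp: GsN_def)
  have finE: "finite (EEs l n k)" for k by (rule finite_subset[of _ "{0..<int l ^ n} \<times> {0..<int l ^ n}"]) (auto simp: EEs_def)
  show ?thesis
  proof (cases "b = 0")
    case False
    then show ?thesis by simp
  next
    case b0: True
    define m where "m = n - Suc a"
    have m: "n = Suc (a + m)" using n b0 by (simp add: m_def)
    have n1: "n - 1 = a + m" using m by simp
    define A where "A = q ^ a * q ^ m"
    have Apos: "A > 0" using q by (simp add: A_def)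
    have cG: "real (card (GsN l n)) = A * A * (q ^ 2 - 1)"
    proof -
      have "real (card (GsN l n)) = q ^ n * q ^ n - q ^ (n - 1) * q ^ (n - 1)"
        using card_GsN[OF l1, of n] m by (simp add: q_def)
      also have "\<dots> = (q * A) * (q * A) - A * A" unfolding n1 m by (simp add: A_def power_add)
      also have "\<dots> = A * A * (q ^ 2 - 1)" by (simp add: power2_eq_square algebra_simps)
      finally show ?thesis .
    qed
    show ?thesis
    proof (cases "a = 0")
      case True
      have S: "{p \<in> GsN l n. VVE l a (fst p) (snd p) \<and> b = 0} = GsN l n - EEs l n 1"
        using True b0 by (auto simp: VVE_def EE_def GsN_def EEs_def)
      have "real (card (GsN l n - EEs l n 1)) = real (card (GsN l n)) - real (card (EEs l n 1))"
        by (rule real_card_diff[OF EEs_sub[OF l1 order_refl] finG])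
      also have "\<dots> = A * A * (q ^ 2 - 1) - A * A"
        using cG card_EEs[OF l1 order_refl, of n] True m by (simp add: A_def q_def)
      finally have c: "real (card (GsN l n - EEs l n 1)) = A * A * (q ^ 2 - 2)" by (simp add: algebra_simps)
      have "A * A * (q ^ 2 - 2) / (A * A * (q ^ 2 - 1)) = (q ^ 2 - 2) / (q ^ 2 - 1)"
        using Apos by simp
      then show ?thesis unfolding S c cG using True b0 by (simp add: q_def)
    next
      case False
      have S: "{p \<in> GsN l n. VVE l a (fst p) (snd p) \<and> b = 0} = EEs l n a - EEs l n (Suc a)"
        using b0 EEs_sub[OF l1, of a n] False by (auto simp: VVE_def EEs_def GsN_def)
      have "real (card (EEs l n a - EEs l n (Suc a))) = real (card (EEs l n a)) - real (card (EEs l n (Suc a)))"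
        by (rule real_card_diff[OF EEs_mono finE]) simp
      also have "\<dots> = q ^ Suc m * q ^ Suc m - q ^ m * q ^ m"
        using card_EEs[OF l1, of a n] card_EEs[OF l1, of "Suc a" n] False m by (simp add: q_def)
      also have "\<dots> = q ^ m * q ^ m * (q ^ 2 - 1)" by (simp add: power2_eq_square algebra_simps)
      finally have c: "real (card (EEs l n a - EEs l n (Suc a))) = q ^ m * q ^ m * (q ^ 2 - 1)" .
      have "q ^ m * q ^ m * (q ^ 2 - 1) / (A * A * (q ^ 2 - 1)) = 1 / q ^ (2 * a)"
        using q q2 by (simp add: A_def power_mult power2_eq_square field_simps)
      then show ?thesis unfolding S c cG using False b0 by (simp add: q_def)
    qed
  qed
qed



lemma mu_conj: assumes l: "prime l" and P: "P \<in> GL2 l" and C: "\<And>M. M \<in> C \<Longrightarrow> mat_in l M"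
  shows "mu l (conj_set l P C) a b =
    lim (\<lambda>n. real (card (red l n ` {M \<in> C. ker_group l M \<cong> Agrp l a (a + b)})) / real (card (red l n ` C)))"
proof -
  have l0: "l > 0" using prime_gt_0_nat[OF l] .
  obtain Q where Q: "mat_in l Q" "mmul l P Q = zI l" "mmul l Q P = zI l" using GL2_inv[OF l P] by blast
  have Pm: "mat_in l P" using P by (simp add: GL2_def)
  let ?S = "{M \<in> C. ker_group l M \<cong> Agrp l a (a + b)}"
  have cs: "conj_set l P C = {N. mat_in l N \<and> (\<exists>M\<in>C. mmul l N P = mmul l P M)}" by (simp add: conj_set_def)
  have M: "Mab l (conj_set l P C) a b = {N. mat_in l N \<and> (\<exists>M\<in>?S. mmul l N P = mmul l P M)}"
  proof -
    have "ker_group l N \<cong> Agrp l a (a + b) \<longleftrightarrow> ker_group l M \<cong> Agrp l a (a + b)"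
      if "mat_in l N" "M \<in> C" "mmul l N P = mmul l P M" for N M
      using ker_iso_conj(1)[OF l0 Pm Q(1) C[OF that(2)] that(1) Q(3) Q(2) that(3)] .
    then show ?thesis unfolding Mab_def cs Agrp_def[symmetric] by blast
  qed
  have c1: "card (red l n ` Mab l (conj_set l P C) a b) = card (red l n ` ?S)" for n
    unfolding M by (rule conj_card[OF l0 Pm Q(1) Q(3) Q(2)]) (use C in auto)
  have c2: "card (red l n ` conj_set l P C) = card (red l n ` C)" for n
    unfolding cs by (rule conj_card[OF l0 Pm Q(1) Q(3) Q(2) C])
  show ?thesis unfolding mu_def haar_def c1 c2 ..
qed

lemma lim_eventually: "(\<And>n. n \<ge> N \<Longrightarrow> f n = (c::real)) \<Longrightarrow> lim f = c"
  by (rule limI, rule tendsto_eventually) (auto simp: eventually_sequentially)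

lemma split_final: assumes l: "prime l"
  shows "lim (\<lambda>n. real (card (red l n ` {M \<in> split_std l. ker_group l M \<cong> Agrp l a (a + b)})) / real (card (red l n ` split_std l))) =
     (if a = 0 \<and> b = 0 then (real l - 2)^2 / (real l - 1)^2
      else if a = 0 \<and> b > 0 then 2 * (real l - 2) / (real l - 1) / real l ^ b
      else if a > 0 \<and> b = 0 then 1 / real l ^ (2 * a)
      else 2 / real l ^ (2 * a + b))"
proof (rule lim_eventually[of "a + b + 1"])
  fix n assume n: "a + b + 1 \<le> n"
  have l0: "l > 0" and l1: "l > 1" using prime_gt_0_nat[OF l] prime_gt_1_nat[OF l] by auto
  have n1: "n \<ge> 1" using n by simp
  let ?Q = "\<lambda>X Y. (VE l a X \<and> VE l (a + b) Y) \<or> (VE l (a + b) X \<and> VE l a Y)"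
  have img1: "red l n ` {M \<in> split_std l. ker_group l M \<cong> Agrp l a (a + b)} = dg ` {p \<in> UnS l n \<times> UnS l n. ?Q (fst p) (snd p)}"
  proof (rule split_red_img[OF l n1])
    fix x y assume xy: "x \<in> Zl l" "y \<in> Zl l"
    have "Suc a \<le> n" "Suc (a + b) \<le> n" using n by auto
    then show "ker_group l (x, zzero, zzero, y) \<cong> Agrp l a (a + b) \<longleftrightarrow> ?Q (x n) (y n)"
      using split_kernel[OF l xy, of a b] V_level[OF xy(1) l0, of a n] V_level[OF xy(2) l0, of a n]
        V_level[OF xy(1) l0, of "a + b" n] V_level[OF xy(2) l0, of "a + b" n] by simp
  qed
  have img2: "red l n ` {M \<in> split_std l. True} = dg ` {p \<in> UnS l n \<times> UnS l n. True}"
    by (rule split_red_img[OF l n1]) simp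
  have "real (card (red l n ` {M \<in> split_std l. ker_group l M \<cong> Agrp l a (a + b)})) / real (card (red l n ` split_std l))
      = real (card {p \<in> UnS l n \<times> UnS l n. ?Q (fst p) (snd p)}) / real (card (UnS l n \<times> UnS l n))"
    using img1 img2 by (simp add: card_dg)
  also have "\<dots> = (if b = 0 then prr l n a ^ 2 else 2 * prr l n a * prr l n (a + b))"
    by (rule split_ratio[OF l n])
  also have "\<dots> = (if a = 0 \<and> b = 0 then (real l - 2)^2 / (real l - 1)^2
      else if a = 0 \<and> b > 0 then 2 * (real l - 2) / (real l - 1) / real l ^ b
      else if a > 0 \<and> b = 0 then 1 / real l ^ (2 * a)
      else 2 / real l ^ (2 * a + b))"
  proof -
    have pa: "prr l n a = (if a = 0 then (real l - 2) / (real l - 1) else 1 / real l ^ a)"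
      using prr_val[OF l, of a n] n by simp
    have pab: "prr l n (a + b) = (if a + b = 0 then (real l - 2) / (real l - 1) else 1 / real l ^ (a + b))"
      using prr_val[OF l, of "a + b" n] n by simp
    consider "a = 0 \<and> b = 0" | "a = 0 \<and> b > 0" | "a > 0 \<and> b = 0" | "a > 0 \<and> b > 0" by (cases "a = 0"; cases "b = 0") auto
    then show ?thesis
    proof cases
      case 1 then show ?thesis using pa by (simp add: power_divide)
    next
      case 2 then show ?thesis using pa pab by simp
    next
      case 3
      have "(1 / real l ^ a) ^ 2 = 1 / real l ^ (2 * a)" by (simp add: power_divide power_mult[symmetric] mult.commute)
      then show ?thesis using 3 pa by simp
    next
      case 4
      have "2 * (1 / real l ^ a) * (1 / real l ^ (a + b)) = 2 / real l ^ (2 * a + b)"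
        by (simp add: power_add mult_2)
      then show ?thesis using 4 pa pab by simp
    qed
  qed
  finally show "real (card (red l n ` {M \<in> split_std l. ker_group l M \<cong> Agrp l a (a + b)})) / real (card (red l n ` split_std l)) =
     (if a = 0 \<and> b = 0 then (real l - 2)^2 / (real l - 1)^2
      else if a = 0 \<and> b > 0 then 2 * (real l - 2) / (real l - 1) / real l ^ b
      else if a > 0 \<and> b = 0 then 1 / real l ^ (2 * a)
      else 2 / real l ^ (2 * a + b))" .
qed

lemma nonsplit_final: assumes l: "prime l" and t: "t \<in> Zl l" and nn: "nn \<in> Zl l" and ir: "irr l (t 1) (nn 1)"
  shows "lim (\<lambda>n. real (card (red l n ` {M \<in> nonsplit_std l t nn. ker_group l M \<cong> Agrp l a (a + b)})) / real (card (red l n ` nonsplit_std l t nn))) =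
     (if a = 0 \<and> b = 0 then (real l ^ 2 - 2) / (real l ^ 2 - 1)
      else if a > 0 \<and> b = 0 then 1 / real l ^ (2 * a)
      else 0)"
proof (rule lim_eventually[of "a + b + 1"])
  fix n assume n: "a + b + 1 \<le> n"
  have l0: "l > 0" using prime_gt_0_nat[OF l] by auto
  have n1: "n \<ge> 1" using n by simp
  have img1: "red l n ` {M \<in> nonsplit_std l t nn. ker_group l M \<cong> Agrp l a (a + b)} =
      hn l t nn n ` {p \<in> GsN l n. VVE l a (fst p) (snd p) \<and> b = 0}"
  proof (rule ns_red_img[OF l n1 t nn ir])
    fix x y assume xy: "x \<in> Zl l" "y \<in> Zl l"
    have "Suc a \<le> n" using n by auto
    then show "ker_group l (nsm l t nn x y) \<cong> Agrp l a (a + b) \<longleftrightarrow> VVE l a (x n) (y n) \<and> b = 0"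
      using nonsplit_kernel[OF l t nn xy ir, of a b] VV_level[OF xy l0] by simp
  qed
  have img2: "red l n ` {M \<in> nonsplit_std l t nn. True} = hn l t nn n ` {p \<in> GsN l n. True}"
    by (rule ns_red_img[OF l n1 t nn ir]) simp
  have "real (card (red l n ` {M \<in> nonsplit_std l t nn. ker_group l M \<cong> Agrp l a (a + b)})) / real (card (red l n ` nonsplit_std l t nn))
      = real (card {p \<in> GsN l n. VVE l a (fst p) (snd p) \<and> b = 0}) / real (card (GsN l n))"
    using img1 img2 by (simp add: card_hn)
  also have "\<dots> = (if a = 0 \<and> b = 0 then (real l ^ 2 - 2) / (real l ^ 2 - 1)
      else if a > 0 \<and> b = 0 then 1 / real l ^ (2 * a) else 0)"
    by (rule ns_ratio[OF l n])
  finally show "real (card (red l n ` {M \<in> nonsplit_std l t nn. ker_group l M \<cong> Agrp l a (a + b)})) / real (card (red l n ` nonsplit_std l t nn)) =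
     (if a = 0 \<and> b = 0 then (real l ^ 2 - 2) / (real l ^ 2 - 1)
      else if a > 0 \<and> b = 0 then 1 / real l ^ (2 * a) else 0)" .
qed

theorem theorem3:
  fixes l :: nat and G :: "zmat set" and a b :: nat
  assumes "prime l"
  shows "(split_cartan l G \<longrightarrow>
            mu l G a b =
              (if a = 0 \<and> b = 0 then (real l - 2)^2 / (real l - 1)^2
               else if a = 0 \<and> b > 0 then 2 * (real l - 2) / (real l - 1) / real l ^ b
               else if a > 0 \<and> b = 0 then 1 / real l ^ (2 * a)
               else 2 / real l ^ (2 * a + b)))
       \<and> (nonsplit_cartan l G \<longrightarrow>
            mu l G a b =
              (if a = 0 \<and> b = 0 then (real l ^ 2 - 2) / (real l ^ 2 - 1)
               else if a > 0 \<and> b = 0 then 1 / real l ^ (2 * a)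
               else 0))"
proof (intro conjI impI)
  have l0: "l > 0" using prime_gt_0_nat[OF assms] .
  assume "split_cartan l G"
  then obtain P where P: "P \<in> GL2 l" "G = conj_set l P (split_std l)" by (auto simp: split_cartan_def)
  have C: "mat_in l M" if "M \<in> split_std l" for M
    using that zzero_Zl[OF l0] by (auto simp: split_std_def mat_in_def zunit_def)
  show "mu l G a b =
              (if a = 0 \<and> b = 0 then (real l - 2)^2 / (real l - 1)^2
               else if a = 0 \<and> b > 0 then 2 * (real l - 2) / (real l - 1) / real l ^ b
               else if a > 0 \<and> b = 0 then 1 / real l ^ (2 * a)
               else 2 / real l ^ (2 * a + b))"
    using mu_conj[OF assms P(1) C, where a=a and b=b] split_final[OF assms, where a=a and b=b] P(2) by simp
next
  have l0: "l > 0" using prime_gt_0_nat[OF assms] .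
  assume "nonsplit_cartan l G"
  then obtain P t nn where P: "P \<in> GL2 l" "t \<in> Zl l" "nn \<in> Zl l" "irr l (t 1) (nn 1)"
    "G = conj_set l P (nonsplit_std l t nn)" by (auto simp: nonsplit_cartan_def irr_def)
  have C: "mat_in l M" if "M \<in> nonsplit_std l t nn" for M
    using that by (auto simp: nonsplit_std_def GL2_def)
  show "mu l G a b =
              (if a = 0 \<and> b = 0 then (real l ^ 2 - 2) / (real l ^ 2 - 1)
               else if a > 0 \<and> b = 0 then 1 / real l ^ (2 * a)
               else 0)"
    using mu_conj[OF assms P(1) C, where a=a and b=b] nonsplit_final[OF assms P(2-4), where a=a and b=b] P(5) by simp
qed


end
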